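(* Let $t\in[0,\tilde p]$ and $\rho_t=|(R^{\mathrm{CG}}_t)'(0)|$. Assume the deterministic target vector $\gamma\in\mathbb{R}^p$ satisfies \[ \big\langle \widehat\Sigma_\lambda\exp(-\rho_t\widehat\Sigma_\lambda/2)\beta_\lambda,\ \gamma-\beta_\lambda\big\rangle\ge 0 . \] Then \[ \|\widehat\Sigma_\lambda^{1/2}(\hat\beta^{\mathrm{CG}}_{\lambda,t}-\gamma)\|^2\le 4\,\big\|\widehat\Sigma_\lambda^{1/2}\big(\beta_\lambda-\exp(-\rho_t\widehat\Sigma_\lambda/2)\beta_\lambda-\gamma\big)\big\|^2+4\,\big\|(\rho_t\widehat\Sigma_\lambda\wedge 1)^{1/2}\varepsilon_\lambda\big\|^2, \] where $(\rho_t\widehat\Sigma_\lambda\wedge1)^{1/2}$ denotes $f(\widehat\Sigma_\lambda)$ for $f(x)=(\rho_tx\wedge1)^{1/2}$. Moreover, the condition on $\gamma$ is always satisfied for $\gamma=\beta_{\lambda'}=\widehat\Sigma_{\lambda'}^{-1}\widehat\Sigma\beta_0$ with $\lambda'\in[0,\lambda]$.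
   Context: Linear model $y=X\beta_0+\varepsilon$, $\beta_0=X^+X\beta_0$, $\mathbb{E}[\varepsilon_i|x_i]=0$, $\mathrm{Var}(\varepsilon_i|x_i)=\sigma^2$. Let $\widehat\Sigma=\frac1nX^\top X$, $\widehat\Sigma_\lambda=\widehat\Sigma+\lambda I_p$, $\lambda\ge0$, $y_\lambda=\frac1n\widehat\Sigma_\lambda^{-1/2}X^\top y=\widehat\Sigma_\lambda^{1/2}\beta_\lambda+\varepsilon_\lambda$ with $\beta_\lambda=\widehat\Sigma_\lambda^{-1}\widehat\Sigma\beta_0$, $\varepsilon_\lambda=\frac1n\widehat\Sigma_\lambda^{-1/2}X^\top\varepsilon$. For integer $k$, $R^{\mathrm{CG}}_k$ is the polynomial of degree $k$ with value $1$ at $0$ minimising $\|P_k(\widehat\Sigma_\lambda)y_\lambda\|^2$; for $t=k+\alpha$, $\alpha\in(0,1]$, $R^{\mathrm{CG}}_t=(1-\alpha)R^{\mathrm{CG}}_k+\alpha R^{\mathrm{CG}}_{k+1}$; $\tilde p$ is the number of distinct eigenvalues of $\widehat\Sigma_\lambda$ (assuming $X^\top y$ has nonzero projection on every eigenspace of $\widehat\Sigma$). The interpolated CG estimator (iterates of conjugate gradients for the ridge criterion with penalty $\lambda$) is $\hat\beta^{\mathrm{CG}}_{\lambda,t}=\widehat\Sigma_\lambda^{-1/2}(I_p-R^{\mathrm{CG}}_t(\widehat\Sigma_\lambda))y_\lambda$. *)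

theory Defs
  imports "HOL-Analysis.Analysis" "HOL-Computational_Algebra.Polynomial"
begin

definition mat_fun :: "(real \<Rightarrow> real) \<Rightarrow> real^'n^'n \<Rightarrow> real^'n^'n" where
  "mat_fun f A = (THE B. \<forall>v mu. A *v v = mu *\<^sub>R v \<longrightarrow> B *v v = f mu *\<^sub>R v)"

definition mat_pow :: "real^'n^'n \<Rightarrow> nat \<Rightarrow> real^'n^'n" where
  "mat_pow A k = (((**) A) ^^ k) (mat 1)"

definition mat_poly :: "real poly \<Rightarrow> real^'n^'n \<Rightarrow> real^'n^'n" where
  "mat_poly P A = (\<Sum>i\<le>degree P. coeff P i *\<^sub>R mat_pow A i)"

definition eigenvalues :: "real^'n^'n \<Rightarrow> real set" where
  "eigenvalues A = {mu. \<exists>v. v \<noteq> 0 \<and> A *v v = mu *\<^sub>R v}"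

definition Sig_hat :: "real^'p^'n \<Rightarrow> real^'p^'p" where
  "Sig_hat X = (1 / real CARD('n)) *\<^sub>R (transpose X ** X)"

definition Sig_lam :: "real^'p^'n \<Rightarrow> real \<Rightarrow> real^'p^'p" where
  "Sig_lam X lam = Sig_hat X + lam *\<^sub>R mat 1"

definition beta_lam :: "real^'p^'n \<Rightarrow> real \<Rightarrow> real^'p \<Rightarrow> real^'p" where
  "beta_lam X lam b0 = (matrix_inv (Sig_lam X lam) ** Sig_hat X) *v b0"

text \<open>y_lambda = (1/n) Sigma_lambda^{-1/2} X^T y  (same map gives eps_lambda from eps).\<close>
definition y_lam :: "real^'p^'n \<Rightarrow> real \<Rightarrow> real^'n \<Rightarrow> real^'p" where
  "y_lam X lam y = (1 / real CARD('n)) *\<^sub>R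
      (mat_fun (\<lambda>x. 1 / sqrt x) (Sig_lam X lam) *v (transpose X *v y))"

definition R_CG :: "real^'p^'n \<Rightarrow> real \<Rightarrow> real^'n \<Rightarrow> nat \<Rightarrow> real poly" where
  "R_CG X lam y k = (THE P. degree P \<le> k \<and> poly P 0 = 1 \<and>
      (\<forall>Q. degree Q \<le> k \<and> poly Q 0 = 1 \<longrightarrow>
         norm (mat_poly P (Sig_lam X lam) *v y_lam X lam y)
           \<le> norm (mat_poly Q (Sig_lam X lam) *v y_lam X lam y)))"

text \<open>Interpolated residual polynomial: for t = k + alpha, alpha in (0,1],
  R_t = (1 - alpha) R_k + alpha R_{k+1}; R_0 is the order-0 polynomial.\<close>
definition R_CG_t :: "real^'p^'n \<Rightarrow> real \<Rightarrow> real^'n \<Rightarrow> real \<Rightarrow> real poly" where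
  "R_CG_t X lam y t =
     (if t \<le> 0 then R_CG X lam y 0
      else (let k = nat (\<lceil>t\<rceil> - 1); a = t - real k in
            smult (1 - a) (R_CG X lam y k) + smult a (R_CG X lam y (Suc k))))"

definition beta_CG :: "real^'p^'n \<Rightarrow> real \<Rightarrow> real^'n \<Rightarrow> real \<Rightarrow> real^'p" where
  "beta_CG X lam y t = mat_fun (\<lambda>x. 1 / sqrt x) (Sig_lam X lam) *v
      ((mat 1 - mat_poly (R_CG_t X lam y t) (Sig_lam X lam)) *v y_lam X lam y)"

end

theory Submission
  imports Defs
begin

lemma sym_dot:
  fixes A :: "real^'n^'n"
  assumes "transpose A = A"
  shows "(A *v x) \<bullet> y = x \<bullet> (A *v y)"
proof -
  have "x \<bullet> (A *v y) = (x v* A) \<bullet> y" by (simp add: dot_lmul_matrix)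
  also have "x v* A = transpose A *v x" by (simp add: transpose_matrix_vector)
  finally show ?thesis using assms by simp
qed

lemma exists_eig_in_subspace:
  fixes A :: "real^'n^'n"
  assumes sym: "transpose A = A" and U: "subspace U" and inv: "\<And>x. x \<in> U \<Longrightarrow> A *v x \<in> U"
    and ne: "u \<in> U" "u \<noteq> 0"
  shows "\<exists>v\<in>U. v \<noteq> 0 \<and> (\<exists>mu. A *v v = mu *\<^sub>R v)"
proof -
  define K where "K = sphere 0 1 \<inter> U"
  have cK: "compact K" unfolding K_def
    using compact_Int_closed[OF compact_sphere closed_subspace[OF U]] by blast
  have "u /\<^sub>R norm u \<in> K" using ne U unfolding K_def by (simp add: subspace_scale)
  hence neK: "K \<noteq> {}" by auto
  have cont: "continuous_on K (\<lambda>x. x \<bullet> (A *v x))"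
    by (intro continuous_intros matrix_vector_mult_linear_continuous_on continuous_on_id)
  from continuous_attains_sup[OF cK neK cont] obtain x where xK: "x \<in> K"
    and xmax0: "\<forall>y\<in>K. y \<bullet> (A *v y) \<le> x \<bullet> (A *v x)" by auto
  have xmax: "\<And>y. y \<in> K \<Longrightarrow> y \<bullet> (A *v y) \<le> x \<bullet> (A *v x)" using xmax0 by auto
  define M where "M = x \<bullet> (A *v x)"
  have xU: "x \<in> U" and nx: "norm x = 1" using xK unfolding K_def by auto
  have bound: "y \<bullet> (A *v y) \<le> M * (y \<bullet> y)" if yU: "y \<in> U" for y
  proof (cases "y = 0")
    case True then show ?thesis by simp
  next
    case False
    have "y /\<^sub>R norm y \<in> K" using yU False U unfolding K_def by (simp add: subspace_scale)
    hence "(y /\<^sub>R norm y) \<bullet> (A *v (y /\<^sub>R norm y)) \<le> M" using xmax unfolding M_def by blast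
    moreover have "(y /\<^sub>R norm y) \<bullet> (A *v (y /\<^sub>R norm y)) = (y \<bullet> (A *v y)) / (norm y)^2"
      by (simp add: matrix_vector_mult_scaleR power2_eq_square divide_inverse)
    ultimately have "(y \<bullet> (A *v y)) / (norm y)^2 \<le> M" by simp
    moreover have "(norm y)^2 > 0" using False by simp
    ultimately have "y \<bullet> (A *v y) \<le> M * (norm y)^2" by (simp add: divide_le_eq)
    then show ?thesis by (simp add: power2_norm_eq_inner)
  qed
  define h where "h = A *v x - M *\<^sub>R x"
  have hU: "h \<in> U" unfolding h_def using xU inv U by (simp add: subspace_diff subspace_scale)
  have xx: "x \<bullet> x = 1" using nx by (metis norm_eq_1 )
  define p where "p = h \<bullet> h"
  define q where "q = h \<bullet> (A *v h) - M * (h \<bullet> h)"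
  have key: "2 * t * p + t^2 * q \<le> 0" for t
  proof -
    have "x + t *\<^sub>R h \<in> U" using xU hU U by (simp add: subspace_add subspace_scale)
    from bound[OF this] have
      "(x + t *\<^sub>R h) \<bullet> (A *v (x + t *\<^sub>R h)) \<le> M * ((x + t *\<^sub>R h) \<bullet> (x + t *\<^sub>R h))" .
    moreover have "(x + t *\<^sub>R h) \<bullet> (A *v (x + t *\<^sub>R h)) =
        x \<bullet> (A *v x) + t * (x \<bullet> (A *v h)) + t * (h \<bullet> (A *v x)) + t * (t * (h \<bullet> (A *v h)))"
      by (simp add: matrix_vector_right_distrib matrix_vector_mult_scaleR inner_add_left inner_add_right distrib_left)
    moreover have "x \<bullet> (A *v h) = h \<bullet> (A *v x)"
      using sym_dot[OF sym, of h x] by (simp add: inner_commute)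
    moreover have "(x + t *\<^sub>R h) \<bullet> (x + t *\<^sub>R h) = x \<bullet> x + t * (h \<bullet> x) + t * (h \<bullet> x) + t * (t * (h \<bullet> h))"
      by (simp add: inner_add_left inner_add_right inner_commute)
    ultimately have "M + t * (h \<bullet> (A *v x)) + t * (h \<bullet> (A *v x)) + t * (t * (h \<bullet> (A *v h)))
        \<le> M * (1 + t * (h \<bullet> x) + t * (h \<bullet> x) + t * (t * (h \<bullet> h)))" using xx M_def by simp
    hence "2 * t * (h \<bullet> (A *v x) - M * (h \<bullet> x)) + t^2 * (h \<bullet> (A *v h) - M * (h \<bullet> h)) \<le> 0"
      by (simp add: algebra_simps power2_eq_square)
    moreover have p: "h \<bullet> (A *v x) - M * (h \<bullet> x) = p"
      unfolding p_def h_def by (simp add: inner_diff_right inner_diff_left algebra_simps)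
    ultimately show ?thesis unfolding q_def by simp
  qed
  have "p = 0"
  proof (rule ccontr)
    assume "p \<noteq> 0"
    hence pp: "p > 0" unfolding p_def by simp
    define t where "t = p / (\<bar>q\<bar> + 1)"
    have tpos: "t > 0" unfolding t_def using pp by simp
    have "\<bar>t * q\<bar> \<le> p" unfolding t_def using pp
      by (simp add: abs_mult divide_le_eq mult_left_mono)
    hence "2 * p + t * q > 0" using pp by linarith
    hence "t * (2 * p + t * q) > 0" using tpos by simp
    moreover have "t * (2 * p + t * q) = 2 * t * p + t^2 * q" by (simp add: algebra_simps power2_eq_square)
    ultimately show False using key[of t] by linarith
  qed
  hence "h = 0" unfolding p_def by simp
  hence "A *v x = M *\<^sub>R x" unfolding h_def by simp
  moreover have "x \<noteq> 0" using nx by auto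
  ultimately show ?thesis using xU by blast
qed

definition eigvecs :: "real^'n^'n \<Rightarrow> (real^'n) set" where
  "eigvecs A = {v. v \<noteq> 0 \<and> (\<exists>mu. A *v v = mu *\<^sub>R v)}"

lemma span_eigvecs:
  fixes A :: "real^'n^'n"
  assumes sym: "transpose A = A"
  shows "span (eigvecs A) = UNIV"
proof (rule ccontr)
  assume "span (eigvecs A) \<noteq> UNIV"
  then obtain a where a: "a \<noteq> 0" "\<forall>x\<in>span (eigvecs A). a \<bullet> x = 0"
    using span_not_UNIV_orthogonal by blast
  define U where "U = {x. \<forall>v\<in>eigvecs A. x \<bullet> v = 0}"
  have sU: "subspace U" unfolding U_def subspace_def
    by (auto simp: inner_add_left)
  have aU: "a \<in> U" using a unfolding U_def by (auto intro: span_base)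
  have inv: "A *v x \<in> U" if "x \<in> U" for x
    unfolding U_def
  proof (intro CollectI ballI)
    fix v assume v: "v \<in> eigvecs A"
    then obtain mu where mu: "A *v v = mu *\<^sub>R v" unfolding eigvecs_def by auto
    have "x \<bullet> v = 0" using that v unfolding U_def by auto
    then show "(A *v x) \<bullet> v = 0" using sym_dot[OF sym, of x v] mu by simp
  qed
  obtain v where "v \<in> U" "v \<noteq> 0" "\<exists>mu. A *v v = mu *\<^sub>R v"
    using exists_eig_in_subspace[OF sym sU inv aU a(1)] by blast
  hence "v \<in> eigvecs A" unfolding eigvecs_def by auto
  with \<open>v \<in> U\<close> have "v \<bullet> v = 0" unfolding U_def by auto
  with \<open>v \<noteq> 0\<close> show False by simp
qed

lemma eig_orth:
  fixes A :: "real^'n^'n"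
  assumes sym: "transpose A = A" and "A *v u = mu *\<^sub>R u" "A *v v = nu *\<^sub>R v" "mu \<noteq> nu"
  shows "u \<bullet> v = 0"
proof -
  have "mu * (u \<bullet> v) = nu * (u \<bullet> v)" using sym_dot[OF sym, of u v] assms(2,3) by simp
  with assms(4) show ?thesis by simp
qed

lemma eig_ext:
  fixes A B C :: "real^'n^'n"
  assumes sym: "transpose A = A" and h: "\<And>v mu. A *v v = mu *\<^sub>R v \<Longrightarrow> B *v v = C *v v"
  shows "B = C"
proof -
  have "subspace {x. B *v x = C *v x}" unfolding subspace_def
    by (simp add: matrix_vector_right_distrib matrix_vector_mult_scaleR)
  moreover have "eigvecs A \<subseteq> {x. B *v x = C *v x}" using h unfolding eigvecs_def by auto
  ultimately have "span (eigvecs A) \<subseteq> {x. B *v x = C *v x}" by (rule span_minimal[rotated])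
  then show ?thesis using span_eigvecs[OF sym] by (auto simp: matrix_eq)
qed

lemma orth_eig_zero:
  fixes A :: "real^'n^'n"
  assumes sym: "transpose A = A" and h: "\<And>v mu. A *v v = mu *\<^sub>R v \<Longrightarrow> d \<bullet> v = 0"
  shows "d = 0"
proof -
  have "subspace {x. d \<bullet> x = 0}" unfolding subspace_def by (simp add: inner_add_right)
  moreover have "eigvecs A \<subseteq> {x. d \<bullet> x = 0}" using h unfolding eigvecs_def by auto
  ultimately have "span (eigvecs A) \<subseteq> {x. d \<bullet> x = 0}" by (rule span_minimal[rotated])
  then have "d \<bullet> d = 0" using span_eigvecs[OF sym] by blast
  then show ?thesis by simp
qed

lemma finite_eigenvalues:
  fixes A :: "real^'n^'n"
  assumes sym: "transpose A = A"
  shows "finite (eigenvalues A)"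
proof -
  define V where "V mu = (SOME v. v \<noteq> 0 \<and> A *v v = mu *\<^sub>R v)" for mu
  have V: "V mu \<noteq> 0 \<and> A *v V mu = mu *\<^sub>R V mu" if "mu \<in> eigenvalues A" for mu
    using that unfolding eigenvalues_def V_def
    using someI_ex[of "\<lambda>v. v \<noteq> 0 \<and> A *v v = mu *\<^sub>R v"] by auto
  have inj: "inj_on V (eigenvalues A)"
  proof (rule inj_onI)
    fix x y assume xy: "x \<in> eigenvalues A" "y \<in> eigenvalues A" "V x = V y"
    have 1: "A *v V x = x *\<^sub>R V x" "V x \<noteq> 0" using V[OF xy(1)] by auto
    have 2: "A *v V x = y *\<^sub>R V x" using V[OF xy(2)] xy(3) by simp
    from 1 2 have "x *\<^sub>R V x = y *\<^sub>R V x" by simp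
    then show "x = y" using 1(2) by simp
  qed
  have "pairwise orthogonal (V ` eigenvalues A)"
    unfolding pairwise_def orthogonal_def
  proof (intro ballI impI)
    fix a b assume "a \<in> V ` eigenvalues A" "b \<in> V ` eigenvalues A" "a \<noteq> b"
    then obtain x y where xy: "x \<in> eigenvalues A" "y \<in> eigenvalues A" "a = V x" "b = V y" by auto
    with \<open>a \<noteq> b\<close> have "x \<noteq> y" by auto
    then show "a \<bullet> b = 0" using eig_orth[OF sym, of "V x" x "V y" y] V[OF xy(1)] V[OF xy(2)] xy(3,4) by simp
  qed
  moreover have "0 \<notin> V ` eigenvalues A" using V by auto
  ultimately have "independent (V ` eigenvalues A)" by (rule pairwise_orthogonal_independent)
  hence "finite (V ` eigenvalues A)" by (rule finiteI_independent)
  then show ?thesis using finite_imageD[OF _ inj] by simp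
qed

lemma mat_pow_eig:
  fixes A :: "real^'n^'n"
  assumes "A *v v = mu *\<^sub>R v"
  shows "mat_pow A k *v v = (mu ^ k) *\<^sub>R v"
proof (induction k)
  case 0 then show ?case by (simp add: mat_pow_def)
next
  case (Suc k)
  have "mat_pow A (Suc k) = A ** mat_pow A k" by (simp add: mat_pow_def)
  then have "mat_pow A (Suc k) *v v = A *v (mat_pow A k *v v)" by (simp add: matrix_vector_mul_assoc)
  also have "\<dots> = (mu ^ Suc k) *\<^sub>R v" using Suc assms by (simp add: matrix_vector_mult_scaleR)
  finally show ?case .
qed

lemma sum_matrix_vector:
  fixes M :: "'i \<Rightarrow> real^'n^'m"
  shows "(sum M I) *v v = (\<Sum>i\<in>I. M i *v v)"
  by (induction I rule: infinite_finite_induct) (auto simp: matrix_vector_mult_add_rdistrib)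

lemma mat_poly_eig:
  fixes A :: "real^'n^'n"
  assumes "A *v v = mu *\<^sub>R v"
  shows "mat_poly p A *v v = poly p mu *\<^sub>R v"
proof -
  have "mat_poly p A *v v = (\<Sum>i\<le>degree p. coeff p i *\<^sub>R (mat_pow A i *v v))"
    unfolding mat_poly_def sum_matrix_vector by (simp add: scaleR_matrix_vector_assoc)
  also have "\<dots> = (\<Sum>i\<le>degree p. (coeff p i * mu ^ i) *\<^sub>R v)"
    using mat_pow_eig[OF assms] by simp
  also have "\<dots> = poly p mu *\<^sub>R v"
    by (simp add: poly_altdef scaleR_sum_left)
  finally show ?thesis .
qed

lemma lagrange_interp:
  fixes L :: "real set"
  assumes "finite L"
  shows "\<exists>p. \<forall>x\<in>L. poly p x = f x"
  using assms
proof (induction L rule: finite_induct)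
  case empty then show ?case by auto
next
  case (insert a F)
  then obtain p where p: "\<forall>x\<in>F. poly p x = f x" by auto
  define w where "w = (\<Prod>x\<in>F. [:-x, 1:])"
  have wF: "poly w x = 0" if "x \<in> F" for x
    unfolding w_def using that insert(1) by (auto simp: poly_prod)
  have wa: "poly w a \<noteq> 0"
    unfolding w_def using insert(1,2) by (auto simp: poly_prod prod_zero_iff)
  define c where "c = (f a - poly p a) / poly w a"
  define q where "q = p + smult c w"
  have "poly q a = f a" unfolding q_def c_def using wa by simp
  moreover have "poly q x = f x" if "x \<in> F" for x unfolding q_def using p wF that by simp
  ultimately show ?case by auto
qed

lemma mat_fun_char:
  fixes A :: "real^'n^'n"
  assumes sym: "transpose A = A"
  shows "\<forall>v mu. A *v v = mu *\<^sub>R v \<longrightarrow> mat_fun f A *v v = f mu *\<^sub>R v"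
proof -
  obtain p where p: "\<forall>x\<in>eigenvalues A. poly p x = f x"
    using lagrange_interp[OF finite_eigenvalues[OF sym]] by blast
  define B where "B = mat_poly p A"
  have PB: "\<forall>v mu. A *v v = mu *\<^sub>R v \<longrightarrow> B *v v = f mu *\<^sub>R v"
  proof (intro allI impI)
    fix v mu assume e: "A *v v = mu *\<^sub>R v"
    show "B *v v = f mu *\<^sub>R v"
    proof (cases "v = 0")
      case True then show ?thesis by simp
    next
      case False
      then have "mu \<in> eigenvalues A" using e unfolding eigenvalues_def by auto
      then show ?thesis unfolding B_def using mat_poly_eig[OF e] p by simp
    qed
  qed
  have uniq: "C = B" if "\<forall>v mu. A *v v = mu *\<^sub>R v \<longrightarrow> C *v v = f mu *\<^sub>R v" for C
  proof (rule eig_ext[OF sym])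
    fix v mu assume e: "A *v v = mu *\<^sub>R v"
    show "C *v v = B *v v" using that[rule_format, OF e] PB[rule_format, OF e] by simp
  qed
  have "mat_fun f A = B" unfolding mat_fun_def
  proof (rule the_equality)
    show "\<forall>v mu. A *v v = mu *\<^sub>R v \<longrightarrow> B *v v = f mu *\<^sub>R v" by (rule PB)
  next
    fix C assume "\<forall>v mu. A *v v = mu *\<^sub>R v \<longrightarrow> C *v v = f mu *\<^sub>R v"
    then show "C = B" by (rule uniq)
  qed
  then show ?thesis using PB by simp
qed

lemma mat_fun_eig:
  fixes A :: "real^'n^'n"
  assumes sym: "transpose A = A" and "A *v v = mu *\<^sub>R v"
  shows "mat_fun f A *v v = f mu *\<^sub>R v"
  using mat_fun_char[OF sym] assms(2) by blast

lemma mat_fun_unique: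
  fixes A :: "real^'n^'n"
  assumes sym: "transpose A = A" and "\<And>v mu. A *v v = mu *\<^sub>R v \<Longrightarrow> B *v v = f mu *\<^sub>R v"
  shows "mat_fun f A = B"
proof (rule eig_ext[OF sym])
  fix v mu assume e: "A *v v = mu *\<^sub>R v"
  show "mat_fun f A *v v = B *v v" using assms(2)[OF e] mat_fun_eig[OF sym e] by simp
qed

lemma mat_fun_mult:
  fixes A :: "real^'n^'n"
  assumes sym: "transpose A = A"
  shows "mat_fun f A ** mat_fun g A = mat_fun (\<lambda>x. f x * g x) A"
proof (rule mat_fun_unique[OF sym, symmetric])
  fix v mu assume e: "A *v v = mu *\<^sub>R v"
  show "(mat_fun f A ** mat_fun g A) *v v = (f mu * g mu) *\<^sub>R v"
    using mat_fun_eig[OF sym e, of f] mat_fun_eig[OF sym e, of g]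
    by (simp add: matrix_vector_mul_assoc[symmetric] matrix_vector_mult_scaleR)
qed

lemma mat_fun_poly:
  fixes A :: "real^'n^'n"
  assumes sym: "transpose A = A"
  shows "mat_poly p A = mat_fun (poly p) A"
  by (rule mat_fun_unique[OF sym, symmetric]) (simp add: mat_poly_eig)

lemma mat_fun_id:
  fixes A :: "real^'n^'n"
  assumes sym: "transpose A = A"
  shows "mat_fun (\<lambda>x. x) A = A"
  by (rule mat_fun_unique[OF sym]) simp

lemma mat_fun_const:
  fixes A :: "real^'n^'n"
  assumes sym: "transpose A = A"
  shows "mat_fun (\<lambda>x. c) A = c *\<^sub>R mat 1"
  by (rule mat_fun_unique[OF sym]) (simp add: scaleR_matrix_vector_assoc[symmetric])

lemma mat_fun_add:
  fixes A :: "real^'n^'n"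
  assumes sym: "transpose A = A"
  shows "mat_fun (\<lambda>x. f x + g x) A = mat_fun f A + mat_fun g A"
proof (rule mat_fun_unique[OF sym])
  fix v mu assume e: "A *v v = mu *\<^sub>R v"
  show "(mat_fun f A + mat_fun g A) *v v = (f mu + g mu) *\<^sub>R v"
    using mat_fun_eig[OF sym e, of f] mat_fun_eig[OF sym e, of g]
    by (simp add: matrix_vector_mult_add_rdistrib scaleR_add_left)
qed

lemma mat_fun_diff:
  fixes A :: "real^'n^'n"
  assumes sym: "transpose A = A"
  shows "mat_fun (\<lambda>x. f x - g x) A = mat_fun f A - mat_fun g A"
proof (rule mat_fun_unique[OF sym])
  fix v mu assume e: "A *v v = mu *\<^sub>R v"
  show "(mat_fun f A - mat_fun g A) *v v = (f mu - g mu) *\<^sub>R v"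
    using mat_fun_eig[OF sym e, of f] mat_fun_eig[OF sym e, of g]
    by (simp add: matrix_vector_mult_diff_rdistrib scaleR_diff_left)
qed

lemma mat_fun_cong:
  fixes A :: "real^'n^'n"
  assumes sym: "transpose A = A" and "\<And>x. x \<in> eigenvalues A \<Longrightarrow> f x = g x"
  shows "mat_fun f A = mat_fun g A"
proof (rule mat_fun_unique[OF sym])
  fix v mu assume e: "A *v v = mu *\<^sub>R v"
  show "mat_fun g A *v v = f mu *\<^sub>R v"
  proof (cases "v = 0")
    case True then show ?thesis by simp
  next
    case False
    then have "mu \<in> eigenvalues A" using e unfolding eigenvalues_def by auto
    then show ?thesis using assms(2) mat_fun_eig[OF sym e] by simp
  qed
qed

lemma transpose_dot:
  fixes B :: "real^'n^'n"
  shows "(transpose B *v v) \<bullet> u = v \<bullet> (B *v u)"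
  by (simp add: transpose_matrix_vector dot_lmul_matrix)

lemma mat_fun_sym:
  fixes A :: "real^'n^'n"
  assumes sym: "transpose A = A"
  shows "transpose (mat_fun f A) = mat_fun f A"
proof -
  let ?B = "mat_fun f A"
  have "transpose ?B *v v = ?B *v v" if e: "A *v v = nu *\<^sub>R v" for v nu
  proof (rule eq_iff_diff_eq_0[THEN iffD2], rule orth_eig_zero[OF sym])
    fix u mu assume eu: "A *v u = mu *\<^sub>R u"
    have 1: "(transpose ?B *v v) \<bullet> u = f mu * (v \<bullet> u)"
      using transpose_dot[of ?B v u] mat_fun_eig[OF sym eu] by simp
    have 2: "(?B *v v) \<bullet> u = f nu * (v \<bullet> u)"
      using mat_fun_eig[OF sym e] by simp
    have "f mu * (v \<bullet> u) = f nu * (v \<bullet> u)"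
    proof (cases "mu = nu")
      case False then have "v \<bullet> u = 0" using eig_orth[OF sym e eu] by simp
      then show ?thesis by simp
    qed simp
    then show "(transpose ?B *v v - ?B *v v) \<bullet> u = 0" using 1 2 by (simp add: inner_diff_left)
  qed
  then show ?thesis by (intro eig_ext[OF sym]) auto
qed

definition Pj :: "real^'n^'n \<Rightarrow> real \<Rightarrow> real^'n^'n" where
  "Pj A mu = mat_fun (\<lambda>x. if x = mu then 1 else 0) A"

lemma mat_fun_scale:
  fixes A :: "real^'n^'n"
  assumes sym: "transpose A = A"
  shows "mat_fun (\<lambda>x. c * f x) A = c *\<^sub>R mat_fun f A"
proof (rule mat_fun_unique[OF sym])
  fix v mu assume e: "A *v v = mu *\<^sub>R v"
  show "(c *\<^sub>R mat_fun f A) *v v = (c * f mu) *\<^sub>R v"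
    using mat_fun_eig[OF sym e, of f] by (simp add: scaleR_matrix_vector_assoc[symmetric])
qed

lemma Pj_eig:
  fixes A :: "real^'n^'n"
  assumes sym: "transpose A = A" and e: "A *v v = nu *\<^sub>R v"
  shows "Pj A mu *v v = (if nu = mu then v else 0)"
  unfolding Pj_def using mat_fun_eig[OF sym e] by simp

lemma mat_fun_decomp:
  fixes A :: "real^'n^'n"
  assumes sym: "transpose A = A"
  shows "mat_fun f A = (\<Sum>mu\<in>eigenvalues A. f mu *\<^sub>R Pj A mu)"
proof (rule mat_fun_unique[OF sym])
  fix v nu assume e: "A *v v = nu *\<^sub>R v"
  show "(\<Sum>mu\<in>eigenvalues A. f mu *\<^sub>R Pj A mu) *v v = f nu *\<^sub>R v"
  proof (cases "v = 0")
    case True then show ?thesis by simp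
  next
    case False
    then have nu: "nu \<in> eigenvalues A" using e unfolding eigenvalues_def by auto
    have "(\<Sum>mu\<in>eigenvalues A. f mu *\<^sub>R Pj A mu) *v v = (\<Sum>mu\<in>eigenvalues A. f mu *\<^sub>R (Pj A mu *v v))"
      unfolding sum_matrix_vector by (simp add: scaleR_matrix_vector_assoc)
    also have "\<dots> = (\<Sum>mu\<in>eigenvalues A. (if mu = nu then f nu *\<^sub>R v else 0))"
      by (rule sum.cong) (auto simp: Pj_eig[OF sym e])
    also have "\<dots> = f nu *\<^sub>R v" using nu finite_eigenvalues[OF sym] by simp
    finally show ?thesis .
  qed
qed

lemma Pj_sum:
  fixes A :: "real^'n^'n"
  assumes sym: "transpose A = A"
  shows "(\<Sum>mu\<in>eigenvalues A. Pj A mu *v z) = z"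
proof -
  have "mat_fun (\<lambda>x. 1) A = (\<Sum>mu\<in>eigenvalues A. Pj A mu)"
    using mat_fun_decomp[OF sym, of "\<lambda>x. 1"] by simp
  moreover have "mat_fun (\<lambda>x. 1) A = mat 1" using mat_fun_const[OF sym, of 1] by simp
  ultimately have "(\<Sum>mu\<in>eigenvalues A. Pj A mu) = mat 1" by simp
  then have "(\<Sum>mu\<in>eigenvalues A. Pj A mu) *v z = z" by simp
  then show ?thesis unfolding sum_matrix_vector .
qed

lemma Pj_fun:
  fixes A :: "real^'n^'n"
  assumes sym: "transpose A = A"
  shows "Pj A mu *v (mat_fun f A *v z) = f mu *\<^sub>R (Pj A mu *v z)"
proof -
  have "Pj A mu ** mat_fun f A = mat_fun (\<lambda>x. (if x = mu then 1 else 0) * f x) A"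
    unfolding Pj_def by (rule mat_fun_mult[OF sym])
  also have "(\<lambda>x. (if x = mu then 1 else 0) * f x) = (\<lambda>x. f mu * (if x = mu then 1 else 0))"
    by auto
  also have "mat_fun \<dots> A = f mu *\<^sub>R Pj A mu" unfolding Pj_def by (rule mat_fun_scale[OF sym])
  finally show ?thesis
    by (simp add: matrix_vector_mul_assoc scaleR_matrix_vector_assoc)
qed

lemma Pj_A:
  fixes A :: "real^'n^'n"
  assumes sym: "transpose A = A"
  shows "Pj A mu *v (A *v z) = mu *\<^sub>R (Pj A mu *v z)"
  using Pj_fun[OF sym, of mu "\<lambda>x. x" z] mat_fun_id[OF sym] by simp

lemma Pj_Pj:
  fixes A :: "real^'n^'n"
  assumes sym: "transpose A = A"
  shows "Pj A mu *v (Pj A nu *v z) = (if mu = nu then Pj A mu *v z else 0)"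
  using Pj_fun[OF sym, of mu "\<lambda>x. if x = nu then 1 else 0" z] unfolding Pj_def[of A nu, symmetric]
  by auto

lemma Pj_sym_dot:
  fixes A :: "real^'n^'n"
  assumes sym: "transpose A = A"
  shows "(Pj A mu *v x) \<bullet> z = x \<bullet> (Pj A mu *v z)"
  using transpose_dot[of "Pj A mu" x z] mat_fun_sym[OF sym] unfolding Pj_def by simp

lemma A_Pj:
  fixes A :: "real^'n^'n"
  assumes sym: "transpose A = A"
  shows "A *v (Pj A mu *v z) = mu *\<^sub>R (Pj A mu *v z)"
proof -
  have "A ** Pj A mu = mat_fun (\<lambda>x. x * (if x = mu then 1 else 0)) A"
    using mat_fun_mult[OF sym, of "\<lambda>x. x" "\<lambda>x. if x = mu then 1 else 0"] mat_fun_id[OF sym]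
    unfolding Pj_def by simp
  also have "(\<lambda>x. x * (if x = mu then 1 else 0)) = (\<lambda>x. mu * (if x = mu then (1::real) else 0))"
    by auto
  also have "mat_fun \<dots> A = mu *\<^sub>R Pj A mu" unfolding Pj_def by (rule mat_fun_scale[OF sym])
  finally show ?thesis
    by (simp add: matrix_vector_mul_assoc scaleR_matrix_vector_assoc)
qed

lemma inner_decomp:
  fixes A :: "real^'n^'n"
  assumes sym: "transpose A = A"
  shows "x \<bullet> z = (\<Sum>mu\<in>eigenvalues A. (Pj A mu *v x) \<bullet> (Pj A mu *v z))"
proof -
  have "x \<bullet> z = x \<bullet> (\<Sum>mu\<in>eigenvalues A. Pj A mu *v z)" using Pj_sum[OF sym] by simp
  also have "\<dots> = (\<Sum>mu\<in>eigenvalues A. x \<bullet> (Pj A mu *v z))" by (simp add: inner_sum_right)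
  also have "\<dots> = (\<Sum>mu\<in>eigenvalues A. (Pj A mu *v x) \<bullet> (Pj A mu *v z))"
  proof (rule sum.cong[OF refl])
    fix mu
    have "x \<bullet> (Pj A mu *v z) = x \<bullet> (Pj A mu *v (Pj A mu *v z))" using Pj_Pj[OF sym, of mu mu z] by simp
    also have "\<dots> = (Pj A mu *v x) \<bullet> (Pj A mu *v z)" using Pj_sym_dot[OF sym] by simp
    finally show "x \<bullet> (Pj A mu *v z) = (Pj A mu *v x) \<bullet> (Pj A mu *v z)" .
  qed
  finally show ?thesis .
qed

lemma norm_decomp:
  fixes A :: "real^'n^'n"
  assumes sym: "transpose A = A"
  shows "(norm z)^2 = (\<Sum>mu\<in>eigenvalues A. (norm (Pj A mu *v z))^2)"
  using inner_decomp[OF sym, of z z] by (simp add: power2_norm_eq_inner)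

lemma vec_eq_decomp:
  fixes A :: "real^'n^'n"
  assumes sym: "transpose A = A" and "\<And>mu. mu \<in> eigenvalues A \<Longrightarrow> Pj A mu *v x = Pj A mu *v z"
  shows "x = z"
proof -
  have "x = (\<Sum>mu\<in>eigenvalues A. Pj A mu *v x)" using Pj_sum[OF sym] by simp
  also have "\<dots> = (\<Sum>mu\<in>eigenvalues A. Pj A mu *v z)" using assms(2) by (rule sum.cong[OF refl])
  also have "\<dots> = z" using Pj_sum[OF sym] by simp
  finally show ?thesis .
qed

definition rp :: "real list \<Rightarrow> real poly" where
  "rp zs = prod_list (map (\<lambda>z. [:1, -1/z:]) zs)"

lemma poly_rp: "poly (rp zs) x = prod_list (map (\<lambda>z. 1 - x/z) zs)"
  unfolding rp_def by (induction zs) (auto simp: algebra_simps)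

lemma rp_Cons: "rp (z # zs) = [:1, -1/z:] * rp zs"
  unfolding rp_def by simp

lemma rp_remove1: "z \<in> set zs \<Longrightarrow> rp zs = [:1, -1/z:] * rp (remove1 z zs)"
proof (induction zs)
  case Nil then show ?case by simp
next
  case (Cons a zs)
  show ?case
  proof (cases "a = z")
    case True then show ?thesis by (simp add: rp_Cons)
  next
    case False
    then have zs: "z \<in> set zs" using Cons by simp
    have r: "remove1 z (a # zs) = a # remove1 z zs" using False by simp
    show ?thesis using Cons.IH[OF zs] unfolding r rp_Cons by (simp only: mult.left_commute)
  qed
qed

lemma degree_rp:
  assumes "\<forall>z\<in>set zs. z \<noteq> 0"
  shows "rp zs \<noteq> 0 \<and> degree (rp zs) = length zs \<and> lead_coeff (rp zs) = prod_list (map (\<lambda>z. -1/z) zs)"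
  using assms
proof (induction zs)
  case Nil then show ?case by (simp add: rp_def)
next
  case (Cons z zs)
  have nz: "[:1, -1/z:] \<noteq> 0" by simp
  have dz: "degree [:1, -1/z:] = 1" using Cons.prems by simp
  from Cons have ih: "rp zs \<noteq> 0" "degree (rp zs) = length zs"
     "lead_coeff (rp zs) = prod_list (map (\<lambda>z. -1/z) zs)" by auto
  have e: "rp (z # zs) = [:1, -1/z:] * rp zs" by (rule rp_Cons)
  have "rp (z # zs) \<noteq> 0" unfolding e using ih nz by (simp only: mult_eq_0_iff) simp
  moreover have "degree (rp (z # zs)) = length (z # zs)"
    unfolding e using degree_mult_eq[OF nz ih(1)] dz ih(2) by simp
  moreover have "lead_coeff [:1, -1/z:] = -1/z" using dz by simp
  then have "lead_coeff (rp (z # zs)) = prod_list (map (\<lambda>z. -1/z) (z # zs))"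
    unfolding e lead_coeff_mult using ih(3) by simp
  ultimately show ?case by blast
qed

lemma poly_rp0: "poly (rp zs) 0 = 1"
  unfolding poly_rp by (induction zs) auto

lemma pderiv_rp0: "poly (pderiv (rp zs)) 0 = - sum_list (map (\<lambda>z. 1/z) zs)"
proof (induction zs)
  case Nil then show ?case by (simp add: rp_def)
next
  case (Cons z zs)
  have "poly (rp zs) 0 = 1" by (rule poly_rp0)
  moreover have "pderiv [:1, -1/z:] = [:-1/z:]" by (simp add: pderiv_pCons)
  ultimately show ?case using Cons unfolding rp_Cons pderiv_mult poly_add poly_mult by simp
qed

lemma rp_pos_nonpos:
  assumes "\<forall>z\<in>set zs. z > 0" "x \<le> 0"
  shows "poly (rp zs) x > 0"
  unfolding poly_rp using assms
proof (induction zs)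
  case Nil then show ?case by simp
next
  case (Cons z zs)
  have "1 - x / z > 0" using Cons.prems by (simp add: divide_nonpos_pos add_pos_nonneg)
  then show ?case using Cons by simp
qed

lemma poly_decomp:
  fixes P :: "real poly"
  assumes "P \<noteq> 0" "finite Z"
  shows "\<exists>h. P = (\<Prod>z\<in>Z. [:-z, 1:] ^ order z P) * h \<and> (\<forall>z\<in>Z. poly h z \<noteq> 0)"
  using assms(2)
proof (induction Z rule: finite_induct)
  case empty then show ?case by simp
next
  case (insert a F)
  then obtain h where h: "P = (\<Prod>z\<in>F. [:-z, 1:] ^ order z P) * h" "\<forall>z\<in>F. poly h z \<noteq> 0" by auto
  have h0: "h \<noteq> 0" using h(1) assms(1) by auto
  obtain h' where h': "h = [:-a, 1:] ^ order a h * h'" "\<not> [:-a, 1:] dvd h'"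
    using order_decomp[OF h0] by blast
  have h'a: "poly h' a \<noteq> 0" using h'(2) by (simp add: poly_eq_0_iff_dvd)
  define Q where "Q = (\<Prod>z\<in>F. [:-z, 1:] ^ order z P)"
  have Qa: "poly Q a \<noteq> 0" unfolding Q_def using insert(1,2) by (auto simp: poly_prod prod_zero_iff)
  have Q0: "Q \<noteq> 0" using Qa by auto
  have "order a P = order a Q + order a h" using h(1) assms(1) unfolding Q_def[symmetric]
    by (simp add: order_mult)
  moreover have "order a Q = 0" using Qa order_root[of Q a] by auto
  ultimately have oa: "order a P = order a h" by simp
  have "(\<Prod>z\<in>insert a F. [:-z, 1:] ^ order z P) = [:-a, 1:] ^ order a P * Q"
    using insert(1,2) unfolding Q_def by simp
  then have "(\<Prod>z\<in>insert a F. [:-z, 1:] ^ order z P) * h' = Q * ([:-a, 1:] ^ order a h * h')"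
    using oa by (simp add: mult_ac)
  also have "\<dots> = Q * h" using h'(1) by simp
  also have "\<dots> = P" using h(1) Q_def by simp
  finally have "P = (\<Prod>z\<in>insert a F. [:-z, 1:] ^ order z P) * h'" by simp
  moreover have "\<forall>z\<in>insert a F. poly h' z \<noteq> 0"
  proof
    fix z assume "z \<in> insert a F"
    then show "poly h' z \<noteq> 0"
    proof
      assume "z = a" then show ?thesis using h'a by simp
    next
      assume "z \<in> F" then have "poly h z \<noteq> 0" using h(2) by auto
      moreover have "poly h z = poly ([:-a, 1:] ^ order a h) z * poly h' z"
        using h'(1) by (metis poly_mult)
      ultimately show ?thesis by auto
    qed
  qed
  ultimately show ?case by blast
qed

lemma finite_pos_roots:
  fixes P :: "real poly"
  assumes "P \<noteq> 0"
  shows "finite {z. z > 0 \<and> poly P z = 0}"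
  by (rule finite_subset[OF _ poly_roots_finite[OF assms]]) auto

lemma poly_no_pos_root_sign:
  fixes h :: "real poly"
  assumes "\<forall>x>0. poly h x \<noteq> 0" "x > 0"
  shows "poly h 1 * poly h x > 0"
proof (rule ccontr)
  assume "\<not> poly h 1 * poly h x > 0"
  moreover have "poly h 1 \<noteq> 0" "poly h x \<noteq> 0" using assms by auto
  ultimately have neg: "poly h 1 * poly h x < 0"
    by (metis linorder_neqE_linordered_idom mult_eq_0_iff)
  show False
  proof (cases "x < 1")
    case True
    have "poly h x * poly h 1 < 0" using neg by (simp add: mult.commute)
    from poly_IVT[OF True this] obtain r where "r > x" "r < 1" "poly h r = 0" by auto
    then show False using assms by auto
  next
    case False
    then have "1 < x \<or> x = 1" by auto
    then show False
    proof
      assume "1 < x"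
      from poly_IVT[OF this neg] obtain r where "r > 1" "r < x" "poly h r = 0" by auto
      then show False using assms by auto
    next
      assume "x = 1" then show False using neg by (simp add: mult_less_0_iff)
    qed
  qed
qed

lemma sign_change:
  fixes P :: "real poly" and L :: "real set"
  assumes fin: "finite L" and pos: "\<forall>mu\<in>L. mu > 0 \<and> w mu > 0" and P0: "P \<noteq> 0"
    and orth: "\<forall>q. degree q < k \<longrightarrow> (\<Sum>mu\<in>L. w mu * mu * poly P mu * poly q mu) = 0"
    and kL: "k \<le> card L"
  shows "k \<le> card {z. z > 0 \<and> poly P z = 0}"
proof (rule ccontr)
  define Z where "Z = {z. z > 0 \<and> poly P z = 0}"
  assume "\<not> k \<le> card {z. z > 0 \<and> poly P z = 0}"
  then have cZ: "card Z < k" unfolding Z_def by simp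
  have fZ: "finite Z" unfolding Z_def using finite_pos_roots[OF P0] .
  obtain h where h: "P = (\<Prod>z\<in>Z. [:-z, 1:] ^ order z P) * h" "\<forall>z\<in>Z. poly h z \<noteq> 0"
    using poly_decomp[OF P0 fZ] by blast
  define e where "e z = (if odd (order z P) then 1 else (0::nat))" for z
  define q where "q = (\<Prod>z\<in>Z. [:-z, 1:] ^ e z)"
  have "degree q = (\<Sum>z\<in>Z. e z)" unfolding q_def
    by (subst degree_prod_sum_eq) (auto simp: degree_power_eq)
  also have "\<dots> \<le> (\<Sum>z\<in>Z. 1)" by (rule sum_mono) (simp add: e_def)
  also have "\<dots> = card Z" by simp
  finally have "degree q < k" using cZ by simp
  with orth have S0: "(\<Sum>mu\<in>L. w mu * mu * poly P mu * poly q mu) = 0" by blast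
  have hpos: "\<forall>x>0. poly h x \<noteq> 0"
  proof (intro allI impI)
    fix x :: real assume x: "x > 0"
    show "poly h x \<noteq> 0"
    proof
      assume hx: "poly h x = 0"
      then have "poly P x = 0" by (subst h(1)) simp
      then have "x \<in> Z" unfolding Z_def using x by simp
      then show False using h(2) hx by auto
    qed
  qed
  define c where "c = poly h 1"
  have c0: "c \<noteq> 0" unfolding c_def using hpos by simp
  have sgn: "c * (poly P x * poly q x) \<ge> 0" if x: "x > 0" for x
  proof -
    have A: "poly P x * poly q x = (\<Prod>z\<in>Z. (x - z) ^ (order z P + e z)) * poly h x"
      apply (subst h(1))
      unfolding q_def poly_mult poly_prod poly_power
      by (simp add: power_add prod.distrib mult_ac)
    have B: "(\<Prod>z\<in>Z. (x - z) ^ (order z P + e z)) \<ge> 0"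
    proof (rule prod_nonneg)
      fix z assume "z \<in> Z"
      have "even (order z P + e z)" by (cases "odd (order z P)") (simp_all add: e_def)
      then show "(x - z) ^ (order z P + e z) \<ge> 0" by (rule zero_le_even_power)
    qed
    have C: "c * poly h x > 0" unfolding c_def using poly_no_pos_root_sign[OF hpos x] .
    have "c * (poly P x * poly q x) = (\<Prod>z\<in>Z. (x - z) ^ (order z P + e z)) * (c * poly h x)"
      unfolding A by (simp add: mult_ac)
    also have "\<dots> \<ge> 0" using B C by simp
    finally show ?thesis .
  qed
  have terms: "c * (w mu * mu * poly P mu * poly q mu) = 0" if mu: "mu \<in> L" for mu
  proof -
    have nn: "\<forall>nu\<in>L. c * (w nu * nu * poly P nu * poly q nu) \<ge> 0"
    proof
      fix nu assume "nu \<in> L"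
      then have "w nu * nu > 0" "nu > 0" using pos by auto
      moreover have "c * (poly P nu * poly q nu) \<ge> 0" using sgn \<open>nu > 0\<close> by blast
      ultimately have "(w nu * nu) * (c * (poly P nu * poly q nu)) \<ge> 0" by simp
      then show "c * (w nu * nu * poly P nu * poly q nu) \<ge> 0" by (simp add: mult_ac)
    qed
    have "(\<Sum>nu\<in>L. c * (w nu * nu * poly P nu * poly q nu)) = c * (\<Sum>nu\<in>L. w nu * nu * poly P nu * poly q nu)"
      by (rule sum_distrib_left[symmetric])
    then have sum0: "(\<Sum>nu\<in>L. c * (w nu * nu * poly P nu * poly q nu)) = 0"
      using S0 by simp
    have "\<forall>nu\<in>L. c * (w nu * nu * poly P nu * poly q nu) = 0"
      using sum_nonneg_eq_0_iff[OF fin, of "\<lambda>nu. c * (w nu * nu * poly P nu * poly q nu)"] nn sum0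
      by simp
    then show ?thesis using mu by blast
  qed
  have "L \<subseteq> Z"
  proof
    fix mu assume mu: "mu \<in> L"
    then have "w mu * mu \<noteq> 0" using pos by auto
    then have "poly P mu * poly q mu = 0" using terms[OF mu] c0 by simp
    moreover have "poly q mu = 0 \<Longrightarrow> poly P mu = 0"
    proof -
      assume "poly q mu = 0"
      then obtain z where "z \<in> Z" "(mu - z) ^ e z = 0" unfolding q_def poly_prod poly_power
        using fZ by (auto simp: prod_zero_iff)
      then have "mu = z" by simp
      then show "poly P mu = 0" using \<open>z \<in> Z\<close> unfolding Z_def by simp
    qed
    ultimately have "poly P mu = 0" by auto
    then show "mu \<in> Z" unfolding Z_def using mu pos by auto
  qed
  then have "card L \<le> card Z" using fZ by (rule card_mono[rotated])
  then show False using cZ kL by simp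
qed

lemma prod_list_concat_rep:
  "prod_list (map f (concat (map (\<lambda>z. replicate (n z) z) xs))) = prod_list (map (\<lambda>z. f z ^ n z) xs)"
  by (induction xs) (auto simp: prod_list_replicate)

lemma prod_list_split:
  fixes zs :: "real list"
  assumes "\<forall>z\<in>set zs. z \<noteq> 0"
  shows "prod_list (map (\<lambda>z. x - z) zs) = prod_list (map (\<lambda>z. 1 - x/z) zs) * prod_list (map (\<lambda>z. -z) zs)"
  using assms by (induction zs) (auto simp: field_simps)

lemma degree0_const:
  fixes h :: "real poly"
  assumes "degree h = 0"
  shows "h = [:coeff h 0:]"
proof -
  obtain a where "h = [:a:]" using degree_eq_zeroE[OF assms] by blast
  then show ?thesis by simp
qed

lemma roots_to_rp:
  fixes P :: "real poly"
  assumes P0: "poly P 0 = 1"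
    and deg: "degree P \<le> card {z. z > 0 \<and> poly P z = 0} \<or>
       (degree P \<le> card {z. z > 0 \<and> poly P z = 0} + 1 \<and> (\<forall>x\<le>0. poly P x \<noteq> 0))"
  shows "\<exists>zs. (\<forall>z\<in>set zs. z > 0) \<and> P = rp zs"
proof -
  define Z where "Z = {z. z > 0 \<and> poly P z = 0}"
  have Pn0: "P \<noteq> 0" using P0 by auto
  have fZ: "finite Z" unfolding Z_def using finite_pos_roots[OF Pn0] .
  obtain h where h: "P = (\<Prod>z\<in>Z. [:-z, 1:] ^ order z P) * h" "\<forall>z\<in>Z. poly h z \<noteq> 0"
    using poly_decomp[OF Pn0 fZ] by blast
  define Q where "Q = (\<Prod>z\<in>Z. [:-z, 1:] ^ order z P)"
  have hP: "P = Q * h" using h(1) Q_def by simp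
  have Q0: "Q \<noteq> 0" and h0: "h \<noteq> 0" using hP Pn0 by auto
  have "degree Q = (\<Sum>z\<in>Z. order z P)" unfolding Q_def
    by (subst degree_prod_sum_eq) (auto simp: degree_power_eq)
  moreover have "(\<Sum>z\<in>Z. order z P) \<ge> (\<Sum>z\<in>Z. 1)"
  proof (rule sum_mono)
    fix z assume "z \<in> Z"
    then have "poly P z = 0" unfolding Z_def by simp
    then have "order z P \<noteq> 0" using order_root Pn0 by auto
    then show "1 \<le> order z P" by simp
  qed
  ultimately have dQ: "degree Q \<ge> card Z" by simp
  have dP: "degree P = degree Q + degree h" using hP degree_mult_eq[OF Q0 h0] by simp
  have "degree h = 0"
  proof (rule ccontr)
    assume "degree h \<noteq> 0"
    moreover have "degree h \<le> 1" using deg dP dQ unfolding Z_def[symmetric] by auto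
    ultimately have d1: "degree h = 1" by simp
    define r where "r = - coeff h 0 / coeff h 1"
    have c1: "coeff h 1 \<noteq> 0" using d1 h0 by (metis leading_coeff_0_iff)
    have "poly h r = coeff h 0 + coeff h 1 * r" using d1 by (simp add: poly_altdef)
    then have hr: "poly h r = 0" unfolding r_def using c1 by simp
    then have Pr: "poly P r = 0" using hP by simp
    have "degree P \<le> card Z \<or> (\<forall>x\<le>0. poly P x \<noteq> 0)" using deg unfolding Z_def by blast
    then show False
    proof
      assume "degree P \<le> card Z" then show False using dP dQ d1 by simp
    next
      assume np: "\<forall>x\<le>0. poly P x \<noteq> 0"
      have "r > 0"
      proof (rule ccontr)
        assume "\<not> r > 0"
        then have "r \<le> 0" by simp
        then show False using np Pr by blast
      qed
      then have "r \<in> Z" unfolding Z_def using Pr by simp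
      then show False using h(2) hr by auto
    qed
  qed
  then have hc: "h = [:coeff h 0:]" by (rule degree0_const)
  define c where "c = coeff h 0"
  obtain xs where xs: "distinct xs" "set xs = Z" using finite_distinct_list[OF fZ] by blast
  define zs where "zs = concat (map (\<lambda>z. replicate (order z P) z) xs)"
  have zsZ: "\<forall>z\<in>set zs. z > 0" unfolding zs_def using xs(2) unfolding Z_def by auto
  have pP: "poly P x = c * prod_list (map (\<lambda>z. x - z) zs)" for x
  proof -
    have hx: "poly h x = c" unfolding c_def by (subst hc) simp
    have Qx: "poly Q x = (\<Prod>z\<in>Z. (x - z) ^ order z P)" unfolding Q_def poly_prod poly_power by simp
    have "(\<Prod>z\<in>set xs. (x - z) ^ order z P) = prod_list (map (\<lambda>z. (x - z) ^ order z P) xs)"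
      by (rule prod.distinct_set_conv_list[OF xs(1)])
    then have L: "(\<Prod>z\<in>Z. (x - z) ^ order z P) = prod_list (map (\<lambda>z. (x - z) ^ order z P) xs)"
      unfolding xs(2) .
    have "prod_list (map (\<lambda>z. (x - z) ^ order z P) xs) = prod_list (map (\<lambda>z. x - z) zs)"
      unfolding zs_def by (rule prod_list_concat_rep[symmetric])
    moreover have "poly P x = poly Q x * poly h x" using hP by simp
    ultimately show ?thesis using hx Qx L by simp
  qed
  have nz: "\<forall>z\<in>set zs. z \<noteq> 0" using zsZ by auto
  have c1: "c * prod_list (map (\<lambda>z. -z) zs) = 1" using pP[of 0] P0 by simp
  have "poly P x = poly (rp zs) x" for x
    unfolding pP poly_rp prod_list_split[OF nz] using c1 by (simp add: mult_ac)
  then have "P = rp zs" using poly_eq_poly_eq_iff by blast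
  then show ?thesis using zsZ by blast
qed

lemma quad_form:
  fixes A B C Daa Dae Dee :: real
  assumes A: "A \<ge> 0" and C: "C \<ge> 0" and B: "B^2 \<le> A * C" and Da: "Daa \<ge> 0" and De: "Dee \<ge> 0"
    and D: "Dae^2 \<le> Daa * Dee"
  shows "Daa * A + 2 * Dae * B + Dee * C \<ge> 0"
proof -
  have P: "Daa * A \<ge> 0" and Q: "Dee * C \<ge> 0" using A C Da De by auto
  have "(Dae * B)^2 = Dae^2 * B^2" by (simp add: power_mult_distrib)
  also have "\<dots> \<le> (Daa * Dee) * (A * C)"
    by (rule mult_mono[OF D B]) (use Da De in auto)
  also have "\<dots> = (Daa * A) * (Dee * C)" by (simp add: mult_ac)
  finally have sq: "(Dae * B)^2 \<le> (Daa * A) * (Dee * C)" .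
  have "\<bar>Dae * B\<bar> = sqrt ((Dae * B)^2)" by simp
  also have "\<dots> \<le> sqrt ((Daa * A) * (Dee * C))" using sq by (rule real_sqrt_le_mono)
  also have "\<dots> = sqrt (Daa * A) * sqrt (Dee * C)" by (simp add: real_sqrt_mult)
  finally have ab: "\<bar>Dae * B\<bar> \<le> sqrt (Daa * A) * sqrt (Dee * C)" .
  have "0 \<le> (sqrt (Daa * A) - sqrt (Dee * C))^2" by simp
  then have "2 * (sqrt (Daa * A) * sqrt (Dee * C)) \<le> (sqrt (Daa * A))^2 + (sqrt (Dee * C))^2"
    unfolding power2_diff by linarith
  also have "\<dots> = Daa * A + Dee * C" using P Q by simp
  finally have "2 * \<bar>Dae * B\<bar> \<le> Daa * A + Dee * C" using ab by linarith
  moreover have "- (Dae * B) \<le> \<bar>Dae * B\<bar>" by simp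
  moreover have "2 * Dae * B = 2 * (Dae * B)" by simp
  ultimately show ?thesis by linarith
qed

lemma one_minus_le_exp: "1 - (x::real) \<le> exp (- x)"
  using exp_ge_add_one_self[of "-x"] by simp

lemma scalar_L:
  fixes s b phi :: real
  assumes s0: "0 \<le> s" and s1: "s < 1" and b0: "0 \<le> b" and p0: "0 \<le> phi"
    and p1: "1 - b \<le> phi" and p2: "phi \<le> exp (- b)"
  defines "r \<equiv> (1 - s) * phi" and "c \<equiv> s + b"
  defines "K \<equiv> 2 * s * r * phi"
  defines "m \<equiv> min c 1"
  shows "3 * exp (- c) - r^2 - K \<ge> 0"
    and "3 * m - (1 - r)^2 - K \<ge> 0"
    and "(r * (1 - r) - K)^2 \<le> (3 * exp (- c) - r^2 - K) * (3 * m - (1 - r)^2 - K)"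
proof -
  have e0: "exp (- c) > 0" by simp
  have eb1: "exp (- b) \<le> 1" using b0 by simp
  have ph1: "phi \<le> 1" using p2 eb1 by linarith
  have r0: "r \<ge> 0" unfolding r_def using s1 p0 by simp
  have rs: "r \<le> 1 - s" unfolding r_def using s1 ph1 by (simp add: mult_left_le)
  have r1: "r \<le> 1" using rs s0 by linarith
  have "r \<le> exp (- s) * exp (- b)" unfolding r_def
    by (rule mult_mono[OF one_minus_le_exp p2]) (use s1 p0 in auto)
  then have re: "r \<le> exp (- c)" unfolding c_def by (simp add: exp_add[symmetric])
  have "r \<ge> (1 - s) * (1 - b)" unfolding r_def using s1 p1 by (simp add: mult_left_mono)
  moreover have "(1 - s) * (1 - b) = 1 - s - b + s * b" by (simp add: algebra_simps)
  moreover have "s * b \<ge> 0" using s0 b0 by simp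
  ultimately have rc: "1 - r \<le> c" unfolding c_def by linarith
  have m1: "m \<le> 1" and mc: "m \<le> c" and m0: "m \<ge> 0" unfolding m_def c_def using s0 b0 by auto
  have rm: "1 - r \<le> m" unfolding m_def using rc r0 by simp
  have sm: "s \<le> m" unfolding m_def c_def using s0 s1 b0 by simp
  have ec1: "exp (- c) \<le> 1" unfolding c_def using s0 b0 by simp
  have K0: "K \<ge> 0" unfolding K_def using s0 r0 p0 by simp
  have "r^2 + K = r * ((1 - s) * phi + 2 * s * phi)" unfolding K_def r_def by (simp add: algebra_simps power2_eq_square)
  also have "\<dots> \<le> r * (1 + s)"
  proof (rule mult_left_mono[OF _ r0])
    have "(1 - s) * phi + 2 * s * phi = (1 + s) * phi" by (simp add: algebra_simps)
    also have "\<dots> \<le> 1 + s" using ph1 s0 by (simp add: mult_left_le)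
    finally show "(1 - s) * phi + 2 * s * phi \<le> 1 + s" .
  qed
  also have "\<dots> \<le> exp (- c) * (1 + s)" by (rule mult_right_mono[OF re]) (use s0 in simp)
  finally have Qaa: "r^2 + K \<le> (1 + s) * exp (- c)" by (simp add: mult_ac)
  have Daa: "3 * exp (- c) - r^2 - K \<ge> (2 - s) * exp (- c)" using Qaa by (simp add: algebra_simps)
  moreover have "(2 - s) * exp (- c) \<ge> 0" using s1 e0 by simp
  ultimately show Daa0: "3 * exp (- c) - r^2 - K \<ge> 0" by linarith
  have "(1 - r)^2 \<le> m * (1 - r)" unfolding power2_eq_square by (rule mult_right_mono[OF rm]) (use r1 in simp)
  moreover have "K \<le> 2 * m * r"
  proof -
    have "K = 2 * s * (r * phi)" unfolding K_def by (simp add: mult_ac)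
    also have "\<dots> \<le> 2 * m * (r * phi)" by (rule mult_right_mono) (use sm r0 p0 in auto)
    also have "\<dots> \<le> 2 * m * r"
    proof -
      have "r * phi \<le> r" using r0 ph1 by (simp add: mult_left_le)
      then show ?thesis using m0 by (simp add: mult_left_mono)
    qed
    finally show ?thesis .
  qed
  ultimately have Dee: "3 * m - (1 - r)^2 - K \<ge> m * (2 - r)" by (simp add: algebra_simps)
  moreover have "m * (2 - r) \<ge> 0" using m0 r1 by simp
  ultimately show "3 * m - (1 - r)^2 - K \<ge> 0" by linarith
  have prod_lb: "(3 * exp (- c) - r^2 - K) * (3 * m - (1 - r)^2 - K) \<ge> ((2 - s) * exp (- c)) * (m * (2 - r))"
    by (rule mult_mono[OF Daa Dee Daa0]) (use m0 r1 in simp)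
  have "1 * 1 \<le> (2 - s) * (2 - r)" by (rule mult_mono) (use s1 r1 in auto)
  then have big: "(2 - s) * (2 - r) \<ge> 1" by simp
  define X where "X = r * (1 - r)"
  have X0: "X \<ge> 0" unfolding X_def using r0 r1 by simp
  have "(X - K)^2 \<le> max (X^2) (K^2)"
  proof (cases "K \<le> X")
    case True
    then have "(X - K)^2 \<le> X^2" by (intro power_mono) (use K0 in auto)
    then show ?thesis by simp
  next
    case False
    then have "(K - X)^2 \<le> K^2" by (intro power_mono) (use X0 in auto)
    then show ?thesis by (simp add: power2_commute)
  qed
  moreover have "X^2 \<le> exp (- c) * m * ((2 - s) * (2 - r))"
  proof -
    have "X^2 = r^2 * (1 - r)^2" unfolding X_def by (simp add: power_mult_distrib)
    also have "\<dots> \<le> exp (- c)^2 * m^2"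
    proof (rule mult_mono)
      show "r^2 \<le> exp (- c)^2" by (rule power_mono[OF re r0])
      show "(1 - r)^2 \<le> m^2" by (rule power_mono[OF rm]) (use r1 in simp)
    qed simp_all
    also have "\<dots> = (exp (- c) * m) * (exp (- c) * m)" by (simp add: power2_eq_square)
    also have "\<dots> \<le> (exp (- c) * m) * 1"
    proof (rule mult_left_mono)
      show "exp (- c) * m \<le> 1" using mult_mono[OF ec1 m1] m0 by simp
      show "0 \<le> exp (- c) * m" using m0 e0 by simp
    qed
    also have "\<dots> \<le> (exp (- c) * m) * ((2 - s) * (2 - r))"
      by (rule mult_left_mono[OF big]) (use m0 e0 in simp)
    finally show ?thesis by (simp add: mult_ac)
  qed
  moreover have "K^2 \<le> exp (- c) * m * ((2 - s) * (2 - r))"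
  proof -
    have "K^2 = 4 * s * s * (r * r) * (phi * phi)" unfolding K_def by (simp add: power2_eq_square mult_ac)
    also have "\<dots> \<le> 4 * s * m * (r * exp (- c)) * 1"
    proof (rule mult_mono)
      show "4 * s * s * (r * r) \<le> 4 * s * m * (r * exp (- c))"
        by (intro mult_mono mult_left_mono) (use s0 sm r0 re m0 in auto)
      show "phi * phi \<le> 1" using mult_mono[OF ph1 ph1] p0 by simp
    qed (use s0 m0 r0 e0 in auto)
    also have "\<dots> = exp (- c) * m * (4 * s * r)" by (simp add: mult_ac)
    also have "\<dots> \<le> exp (- c) * m * ((2 - s) * (2 - r))"
    proof (rule mult_left_mono)
      have "4 * s * r \<le> 4 * s * (1 - s)" using rs s0 by (simp add: mult_left_mono)
      also have "\<dots> \<le> 1"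
      proof -
        have "0 \<le> (2 * s - 1) * (2 * s - 1)" by simp
        moreover have "(2 * s - 1) * (2 * s - 1) = 4 * s * s - 4 * s + 1" by (simp add: algebra_simps)
        moreover have "4 * s * (1 - s) = 4 * s - 4 * s * s" by (simp add: algebra_simps)
        ultimately show ?thesis by linarith
      qed
      finally show "4 * s * r \<le> (2 - s) * (2 - r)" using big by linarith
    qed (use e0 m0 in simp)
    finally show ?thesis .
  qed
  ultimately have "(X - K)^2 \<le> exp (- c) * m * ((2 - s) * (2 - r))" by simp
  also have "\<dots> = ((2 - s) * exp (- c)) * (m * (2 - r))" by (simp add: mult_ac)
  also have "\<dots> \<le> (3 * exp (- c) - r^2 - K) * (3 * m - (1 - r)^2 - K)" by (rule prod_lb)
  finally show "(r * (1 - r) - K)^2 \<le> (3 * exp (- c) - r^2 - K) * (3 * m - (1 - r)^2 - K)"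
    unfolding X_def .
qed

lemma norm_lin2:
  fixes a e :: "'a::real_inner"
  shows "(norm (x *\<^sub>R a + y *\<^sub>R e))^2 = x^2 * (a \<bullet> a) + 2 * x * y * (a \<bullet> e) + y^2 * (e \<bullet> e)"
  unfolding power2_norm_eq_inner by (simp add: inner_add_left inner_add_right inner_commute
      power2_eq_square algebra_simps)

lemma pt_bound:
  fixes a e :: "'a::real_inner" and s c phi :: real
  assumes s0: "0 \<le> s" and cs: "s \<le> c"
    and L: "s < 1 \<Longrightarrow> 0 \<le> phi \<and> 1 - (c - s) \<le> phi \<and> phi \<le> exp (- (c - s))"
    and H: "1 \<le> s \<Longrightarrow> 1 \<le> c"
  shows "(norm (((1 - s) * phi) *\<^sub>R (a + e) - e))^2 + 2 * s * (1 - s) * phi^2 * (norm (a + e))^2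
         \<le> 3 * exp (- c) * (norm a)^2 + 3 * min c 1 * (norm e)^2"
proof -
  define A where "A = a \<bullet> a"
  define B where "B = a \<bullet> e"
  define C where "C = e \<bullet> e"
  define r where "r = (1 - s) * phi"
  have nA: "(norm a)^2 = A" and nC: "(norm e)^2 = C" unfolding A_def C_def by (simp_all add: power2_norm_eq_inner)
  have e1: "r *\<^sub>R (a + e) - e = r *\<^sub>R a + (r - 1) *\<^sub>R e" by (simp add: algebra_simps)
  have e2: "a + e = 1 *\<^sub>R a + 1 *\<^sub>R e" by simp
  have N1: "(norm (r *\<^sub>R (a + e) - e))^2 = r^2 * A + 2 * r * (r - 1) * B + (r - 1)^2 * C"
    unfolding e1 norm_lin2 A_def B_def C_def ..
  have N2: "(norm (a + e))^2 = A + 2 * B + C"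
    unfolding e2 norm_lin2 A_def B_def C_def by simp
  have A0: "A \<ge> 0" and C0: "C \<ge> 0" unfolding A_def C_def by simp_all
  have CS: "B^2 \<le> A * C" unfolding A_def B_def C_def by (rule Cauchy_Schwarz_ineq)
  show ?thesis
  proof (cases "s < 1")
    case True
    define b where "b = c - s"
    have b0: "0 \<le> b" unfolding b_def using cs by simp
    from L[OF True] have p: "0 \<le> phi" "1 - b \<le> phi" "phi \<le> exp (- b)" unfolding b_def by auto
    have cb: "c = s + b" unfolding b_def by simp
    define K where "K = 2 * s * r * phi"
    note sc = scalar_L[OF s0 True b0 p, folded r_def cb, folded K_def]
    have KK: "2 * s * (1 - s) * phi^2 = K" unfolding K_def r_def by (simp add: power2_eq_square mult_ac)
    have "3 * exp (- c) * A + 3 * min c 1 * C - ((r^2 * A + 2 * r * (r - 1) * B + (r - 1)^2 * C) + K * (A + 2 * B + C))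
        = (3 * exp (- c) - r^2 - K) * A + 2 * (r * (1 - r) - K) * B + (3 * min c 1 - (1 - r)^2 - K) * C"
      by (simp add: algebra_simps power2_eq_square)
    also have "\<dots> \<ge> 0" by (rule quad_form[OF A0 C0 CS sc(1) sc(2) sc(3)])
    finally show ?thesis unfolding r_def[symmetric] N1 N2 KK nA nC by linarith
  next
    case False
    then have s1: "1 \<le> s" by simp
    have m1: "min c 1 = 1" using H[OF s1] by simp
    define p where "p = (s - 1) * phi"
    have rp: "r = - p" unfolding r_def p_def by (simp add: algebra_simps)
    have "2 * s * (1 - s) * phi^2 \<le> - 2 * p^2"
    proof -
      have "(s - 1) * (s - 1) \<le> s * (s - 1)" using s1 by (simp add: mult_right_mono)
      then have "(s - 1) * (s - 1) * phi^2 \<le> s * (s - 1) * phi^2" by (simp add: mult_right_mono)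
      then show ?thesis unfolding p_def by (simp add: algebra_simps power2_eq_square)
    qed
    then have T2: "2 * s * (1 - s) * phi^2 * (norm (a + e))^2 \<le> - 2 * p^2 * (norm (a + e))^2"
      by (rule mult_right_mono) simp
    have T1: "(norm (r *\<^sub>R (a + e) - e))^2 \<le> 2 * p^2 * (norm (a + e))^2 + 2 * C"
    proof -
      have "r *\<^sub>R (a + e) - e = - ((p *\<^sub>R (a + e)) + e)" unfolding rp by simp
      then have "(norm (r *\<^sub>R (a + e) - e))^2 = (norm (p *\<^sub>R (a + e) + e))^2" by (metis norm_minus_cancel)
      also have "\<dots> \<le> 2 * (norm (p *\<^sub>R (a + e)))^2 + 2 * (norm e)^2"
      proof -
        define u where "u = p *\<^sub>R (a + e)"
        have "(norm (u + e))^2 + (norm (u - e))^2 = 2 * (norm u)^2 + 2 * (norm e)^2"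
          by (simp add: power2_norm_eq_inner inner_add_left inner_add_right inner_diff_left inner_diff_right inner_commute)
        moreover have "(norm (u - e))^2 \<ge> 0" by simp
        ultimately show ?thesis unfolding u_def by linarith
      qed
      also have "(norm (p *\<^sub>R (a + e)))^2 = p^2 * (norm (a + e))^2" by (simp add: power_mult_distrib)
      finally show ?thesis using nC by simp
    qed
    have "3 * exp (- c) * A \<ge> 0" using A0 by simp
    then show ?thesis unfolding r_def[symmetric] m1 nA nC using T1 T2 C0 by linarith
  qed
qed

lemma young43:
  fixes w d :: "'a::real_inner"
  shows "(norm (w + d))^2 \<le> 4/3 * (norm w)^2 + 4 * (norm d)^2"
proof -
  have "0 \<le> (norm ((1/3) *\<^sub>R w - d))^2" by simp
  also have "(norm ((1/3) *\<^sub>R w - d))^2 = (1/9) * (w \<bullet> w) - (2/3) * (w \<bullet> d) + d \<bullet> d"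
    by (simp add: power2_norm_eq_inner inner_diff_left inner_diff_right inner_commute algebra_simps)
  finally have "(2/3) * (w \<bullet> d) \<le> (1/9) * (w \<bullet> w) + d \<bullet> d" by linarith
  moreover have "(norm (w + d))^2 = w \<bullet> w + 2 * (w \<bullet> d) + d \<bullet> d"
    by (simp add: power2_norm_eq_inner inner_add_left inner_add_right inner_commute)
  moreover have "(norm w)^2 = w \<bullet> w" "(norm d)^2 = d \<bullet> d" by (simp_all add: power2_norm_eq_inner)
  ultimately show ?thesis by linarith
qed

lemma FAL:
  fixes L :: "real set" and a e g :: "real \<Rightarrow> 'a::real_inner" and s c phi :: "real \<Rightarrow> real"
  assumes fin: "finite L"
    and pt: "\<And>mu. mu \<in> L \<Longrightarrow> 0 \<le> s mu \<and> s mu \<le> c mu \<and>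
              (s mu < 1 \<longrightarrow> 0 \<le> phi mu \<and> 1 - (c mu - s mu) \<le> phi mu \<and> phi mu \<le> exp (- (c mu - s mu))) \<and>
              (1 \<le> s mu \<longrightarrow> 1 \<le> c mu)"
    and HPhi: "(\<Sum>mu\<in>L. 2 * s mu * (1 - s mu) * (phi mu)^2 * (norm (a mu + e mu))^2) \<ge> 0"
    and cond: "(\<Sum>mu\<in>L. exp (- c mu / 2) * (a mu \<bullet> (g mu - a mu))) \<ge> 0"
  shows "(\<Sum>mu\<in>L. (norm ((1 - (1 - s mu) * phi mu) *\<^sub>R (a mu + e mu) - g mu))^2)
     \<le> 4 * (\<Sum>mu\<in>L. (norm ((1 - exp (- c mu / 2)) *\<^sub>R a mu - g mu))^2)
       + 4 * (\<Sum>mu\<in>L. min (c mu) 1 * (norm (e mu))^2)"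
proof -
  define r where "r mu = (1 - s mu) * phi mu" for mu
  define w where "w mu = r mu *\<^sub>R (a mu + e mu) - e mu" for mu
  define d where "d mu = g mu - a mu" for mu
  define E where "E mu = exp (- c mu / 2)" for mu
  have EE: "(E mu)^2 = exp (- c mu)" for mu
    unfolding E_def by (simp add: power2_eq_square exp_add[symmetric])
  have W: "(\<Sum>mu\<in>L. (norm (w mu))^2) \<le> 3 * (\<Sum>mu\<in>L. exp (- c mu) * (norm (a mu))^2 + min (c mu) 1 * (norm (e mu))^2)"
  proof -
    have "(\<Sum>mu\<in>L. (norm (w mu))^2) \<le> (\<Sum>mu\<in>L. (norm (w mu))^2) + (\<Sum>mu\<in>L. 2 * s mu * (1 - s mu) * (phi mu)^2 * (norm (a mu + e mu))^2)"
      using HPhi by simp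
    also have "\<dots> = (\<Sum>mu\<in>L. (norm (w mu))^2 + 2 * s mu * (1 - s mu) * (phi mu)^2 * (norm (a mu + e mu))^2)"
      by (simp add: sum.distrib)
    also have "\<dots> \<le> (\<Sum>mu\<in>L. 3 * (exp (- c mu) * (norm (a mu))^2 + min (c mu) 1 * (norm (e mu))^2))"
    proof (rule sum_mono)
      fix mu assume mu: "mu \<in> L"
      from pt[OF mu] have h: "0 \<le> s mu" "s mu \<le> c mu"
        "s mu < 1 \<Longrightarrow> 0 \<le> phi mu \<and> 1 - (c mu - s mu) \<le> phi mu \<and> phi mu \<le> exp (- (c mu - s mu))"
        "1 \<le> s mu \<Longrightarrow> 1 \<le> c mu" by auto
      show "(norm (w mu))^2 + 2 * s mu * (1 - s mu) * (phi mu)^2 * (norm (a mu + e mu))^2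
          \<le> 3 * (exp (- c mu) * (norm (a mu))^2 + min (c mu) 1 * (norm (e mu))^2)"
        using pt_bound[OF h, of "a mu" "e mu"] unfolding w_def r_def by (simp add: algebra_simps)
    qed
    also have "\<dots> = 3 * (\<Sum>mu\<in>L. exp (- c mu) * (norm (a mu))^2 + min (c mu) 1 * (norm (e mu))^2)"
      by (simp add: sum_distrib_left)
    finally show ?thesis .
  qed
  have V: "(\<Sum>mu\<in>L. (norm (E mu *\<^sub>R a mu + d mu))^2) \<ge> (\<Sum>mu\<in>L. exp (- c mu) * (norm (a mu))^2 + (norm (d mu))^2)"
  proof -
    have "(\<Sum>mu\<in>L. (norm (E mu *\<^sub>R a mu + d mu))^2)
       = (\<Sum>mu\<in>L. exp (- c mu) * (norm (a mu))^2 + (norm (d mu))^2) + 2 * (\<Sum>mu\<in>L. E mu * (a mu \<bullet> d mu))"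
    proof -
      have "(norm (E mu *\<^sub>R a mu + d mu))^2 = exp (- c mu) * (norm (a mu))^2 + (norm (d mu))^2 + 2 * (E mu * (a mu \<bullet> d mu))" for mu
        using EE[of mu] unfolding power2_norm_eq_inner
        by (simp add: inner_add_left inner_add_right inner_commute algebra_simps power2_eq_square)
      then show ?thesis by (simp add: sum.distrib sum_distrib_left)
    qed
    moreover have "(\<Sum>mu\<in>L. E mu * (a mu \<bullet> d mu)) \<ge> 0" using cond unfolding E_def d_def .
    ultimately show ?thesis by linarith
  qed
  have "(\<Sum>mu\<in>L. (norm ((1 - r mu) *\<^sub>R (a mu + e mu) - g mu))^2) = (\<Sum>mu\<in>L. (norm (w mu + d mu))^2)"
  proof (rule sum.cong[OF refl])
    fix mu
    have "(1 - r mu) *\<^sub>R (a mu + e mu) - g mu = - (w mu + d mu)" unfolding w_def d_def by (simp add: algebra_simps)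
    then show "(norm ((1 - r mu) *\<^sub>R (a mu + e mu) - g mu))^2 = (norm (w mu + d mu))^2" by (metis norm_minus_cancel)
  qed
  also have "\<dots> \<le> (\<Sum>mu\<in>L. 4/3 * (norm (w mu))^2 + 4 * (norm (d mu))^2)"
    by (rule sum_mono) (rule young43)
  also have "\<dots> = 4/3 * (\<Sum>mu\<in>L. (norm (w mu))^2) + 4 * (\<Sum>mu\<in>L. (norm (d mu))^2)"
    by (simp add: sum.distrib sum_distrib_left)
  also have "\<dots> \<le> 4 * (\<Sum>mu\<in>L. exp (- c mu) * (norm (a mu))^2 + min (c mu) 1 * (norm (e mu))^2) + 4 * (\<Sum>mu\<in>L. (norm (d mu))^2)"
    using W by simp
  also have "\<dots> = 4 * (\<Sum>mu\<in>L. exp (- c mu) * (norm (a mu))^2 + (norm (d mu))^2) + 4 * (\<Sum>mu\<in>L. min (c mu) 1 * (norm (e mu))^2)"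
    by (simp add: sum.distrib algebra_simps)
  also have "\<dots> \<le> 4 * (\<Sum>mu\<in>L. (norm (E mu *\<^sub>R a mu + d mu))^2) + 4 * (\<Sum>mu\<in>L. min (c mu) 1 * (norm (e mu))^2)"
    using V by simp
  also have "(\<Sum>mu\<in>L. (norm (E mu *\<^sub>R a mu + d mu))^2) = (\<Sum>mu\<in>L. (norm ((1 - exp (- c mu / 2)) *\<^sub>R a mu - g mu))^2)"
  proof (rule sum.cong[OF refl])
    fix mu
    have "(1 - exp (- c mu / 2)) *\<^sub>R a mu - g mu = - (E mu *\<^sub>R a mu + d mu)" unfolding E_def d_def by (simp add: algebra_simps)
    then show "(norm (E mu *\<^sub>R a mu + d mu))^2 = (norm ((1 - exp (- c mu / 2)) *\<^sub>R a mu - g mu))^2"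
      by (metis norm_minus_cancel)
  qed
  finally show ?thesis unfolding r_def .
qed

lemma mat_poly_apply_le:
  fixes A :: "real^'n^'n"
  assumes "degree Q \<le> N"
  shows "mat_poly Q A *v y = (\<Sum>i\<le>N. coeff Q i *\<^sub>R (mat_pow A i *v y))"
proof -
  have "mat_poly Q A *v y = (\<Sum>i\<le>degree Q. coeff Q i *\<^sub>R (mat_pow A i *v y))"
    unfolding mat_poly_def sum_matrix_vector by (simp add: scaleR_matrix_vector_assoc)
  also have "\<dots> = (\<Sum>i\<le>N. coeff Q i *\<^sub>R (mat_pow A i *v y))"
    by (rule sum.mono_neutral_left) (use assms in \<open>auto simp: coeff_eq_0\<close>)
  finally show ?thesis .
qed

lemma mat_poly_diff:
  fixes A :: "real^'n^'n"
  assumes sym: "transpose A = A"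
  shows "mat_poly (P - Q) A = mat_poly P A - mat_poly Q A"
proof -
  have "poly (P - Q) = (\<lambda>x. poly P x - poly Q x)" by (rule ext) simp
  then have "mat_poly (P - Q) A = mat_fun (\<lambda>x. poly P x - poly Q x) A"
    unfolding mat_fun_poly[OF sym] by simp
  then show ?thesis unfolding mat_fun_diff[OF sym] mat_fun_poly[OF sym] .
qed

lemma mat_poly_add:
  fixes A :: "real^'n^'n"
  assumes sym: "transpose A = A"
  shows "mat_poly (P + Q) A = mat_poly P A + mat_poly Q A"
proof -
  have "poly (P + Q) = (\<lambda>x. poly P x + poly Q x)" by (rule ext) simp
  then have "mat_poly (P + Q) A = mat_fun (\<lambda>x. poly P x + poly Q x) A"
    unfolding mat_fun_poly[OF sym] by simp
  then show ?thesis unfolding mat_fun_add[OF sym] mat_fun_poly[OF sym] .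
qed

lemma mat_poly_smult:
  fixes A :: "real^'n^'n"
  assumes sym: "transpose A = A"
  shows "mat_poly (smult c P) A = c *\<^sub>R mat_poly P A"
proof -
  have "poly (smult c P) = (\<lambda>x. c * poly P x)" by (rule ext) simp
  then have "mat_poly (smult c P) A = mat_fun (\<lambda>x. c * poly P x) A"
    unfolding mat_fun_poly[OF sym] by simp
  then show ?thesis unfolding mat_fun_scale[OF sym] mat_fun_poly[OF sym] .
qed

lemma Pj_poly:
  fixes A :: "real^'n^'n"
  assumes sym: "transpose A = A"
  shows "Pj A mu *v (mat_poly P A *v y) = poly P mu *\<^sub>R (Pj A mu *v y)"
  unfolding mat_fun_poly[OF sym] by (rule Pj_fun[OF sym])

lemma ip_poly:
  fixes A :: "real^'n^'n"
  assumes sym: "transpose A = A"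
  shows "(mat_poly P A *v y) \<bullet> (mat_poly Q A *v y)
     = (\<Sum>mu\<in>eigenvalues A. poly P mu * poly Q mu * (norm (Pj A mu *v y))^2)"
  unfolding inner_decomp[OF sym, of "mat_poly P A *v y"] Pj_poly[OF sym]
  by (simp add: power2_norm_eq_inner mult_ac)

definition cgmin :: "real^'n^'n \<Rightarrow> real^'n \<Rightarrow> nat \<Rightarrow> real poly \<Rightarrow> bool" where
  "cgmin A y k P \<longleftrightarrow> degree P \<le> k \<and> poly P 0 = 1 \<and>
      (\<forall>Q. degree Q \<le> k \<and> poly Q 0 = 1 \<longrightarrow> norm (mat_poly P A *v y) \<le> norm (mat_poly Q A *v y))"

lemma span_image_sum:
  fixes f :: "nat \<Rightarrow> 'a::real_vector"
  assumes "finite I" "x \<in> span (f ` I)"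
  shows "\<exists>c. x = (\<Sum>i\<in>I. c i *\<^sub>R f i)"
proof -
  define T where "T = {x. \<exists>c. x = (\<Sum>i\<in>I. c i *\<^sub>R f i)}"
  have "subspace T" unfolding subspace_def T_def
  proof (intro conjI ballI allI)
    show "0 \<in> {x. \<exists>c. x = (\<Sum>i\<in>I. c i *\<^sub>R f i)}" by (rule CollectI, rule exI[of _ "\<lambda>_. 0"]) simp
  next
    fix x y assume "x \<in> {x. \<exists>c. x = (\<Sum>i\<in>I. c i *\<^sub>R f i)}" "y \<in> {x. \<exists>c. x = (\<Sum>i\<in>I. c i *\<^sub>R f i)}"
    then obtain c d where "x = (\<Sum>i\<in>I. c i *\<^sub>R f i)" "y = (\<Sum>i\<in>I. d i *\<^sub>R f i)" by auto
    then have "x + y = (\<Sum>i\<in>I. (c i + d i) *\<^sub>R f i)" by (simp add: sum.distrib scaleR_add_left)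
    then show "x + y \<in> {x. \<exists>c. x = (\<Sum>i\<in>I. c i *\<^sub>R f i)}"
      unfolding mem_Collect_eq by (rule exI[of _ "\<lambda>i. c i + d i"])
  next
    fix r :: real and x assume "x \<in> {x. \<exists>c. x = (\<Sum>i\<in>I. c i *\<^sub>R f i)}"
    then obtain c where "x = (\<Sum>i\<in>I. c i *\<^sub>R f i)" by auto
    then have "r *\<^sub>R x = (\<Sum>i\<in>I. (r * c i) *\<^sub>R f i)" by (simp add: scaleR_sum_right)
    then show "r *\<^sub>R x \<in> {x. \<exists>c. x = (\<Sum>i\<in>I. c i *\<^sub>R f i)}"
      unfolding mem_Collect_eq by (rule exI[of _ "\<lambda>i. r * c i"])
  qed
  moreover have "f ` I \<subseteq> T"
  proof
    fix x assume "x \<in> f ` I"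
    then obtain j where j: "j \<in> I" "x = f j" by auto
    have "(\<Sum>i\<in>I. (if i = j then 1 else 0) *\<^sub>R f i) = (\<Sum>i\<in>I. if i = j then f i else 0)"
      by (intro sum.cong refl) simp
    also have "\<dots> = f j" using sum.delta[OF assms(1), of j f] j(1) by simp
    finally have "(\<Sum>i\<in>I. (if i = j then 1 else 0) *\<^sub>R f i) = f j" .
    then show "x \<in> T" unfolding T_def mem_Collect_eq j(2)
      by (intro exI[of _ "\<lambda>i. if i = j then 1 else 0"]) simp
  qed
  ultimately have "span (f ` I) \<subseteq> T" by (rule span_minimal[rotated])
  then show ?thesis using assms(2) unfolding T_def by auto
qed

lemma quad_zero:
  fixes p q :: real
  assumes "\<And>t. 0 \<le> 2 * t * p + t^2 * q"
  shows "p = 0"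
proof (rule ccontr)
  assume p0: "p \<noteq> 0"
  define t where "t = - p / (\<bar>q\<bar> + 1)"
  have d: "\<bar>q\<bar> + 1 > 0" by simp
  have tq: "\<bar>t * q\<bar> \<le> \<bar>p\<bar>"
  proof -
    have "\<bar>t * q\<bar> = \<bar>p\<bar> * (\<bar>q\<bar> / (\<bar>q\<bar> + 1))" unfolding t_def by (simp add: abs_mult abs_divide)
    also have "\<dots> \<le> \<bar>p\<bar> * 1" by (rule mult_left_mono) simp_all
    finally show ?thesis by simp
  qed
  have e: "2 * t * p + t^2 * q = t * (2 * p + t * q)" by (simp add: algebra_simps power2_eq_square)
  have "t * (2 * p + t * q) < 0"
  proof (cases "p > 0")
    case True
    then have "t < 0" unfolding t_def using d by (simp add: divide_pos_pos)
    moreover have "2 * p + t * q > 0" using tq True by (smt (verit) abs_le_iff)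
    ultimately show ?thesis by (simp add: mult_neg_pos)
  next
    case False
    then have pn: "p < 0" using p0 by simp
    then have "t > 0" unfolding t_def using d by (simp add: divide_neg_pos)
    moreover have "2 * p + t * q < 0" using tq pn by (smt (verit) abs_le_iff)
    ultimately show ?thesis by (simp add: mult_pos_neg)
  qed
  then show False using assms[of t] e by simp
qed

context
  fixes A :: "real^'n^'n" and y :: "real^'n"
  assumes sym: "transpose A = A"
begin

lemma cg_exists: "\<exists>P. cgmin A y k P"
proof -
  define f where "f j = mat_pow A j *v y" for j
  define V where "V = f ` {1..k}"
  obtain p z where pz: "p \<in> span V" "\<And>w. w \<in> span V \<Longrightarrow> orthogonal z w" "y = p + z"
    using orthogonal_subspace_decomp_exists[of V y] by metis
  obtain c where pc: "p = (\<Sum>j\<in>{1..k}. c j *\<^sub>R f j)"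
    using span_image_sum[of "{1..k}" p f] pz(1) unfolding V_def by auto
  have app: "mat_poly Q A *v y = y + (\<Sum>j\<in>{1..k}. coeff Q j *\<^sub>R f j)"
    if Q: "degree Q \<le> k" "poly Q 0 = 1" for Q
  proof -
    have "mat_poly Q A *v y = (\<Sum>i\<le>k. coeff Q i *\<^sub>R f i)"
      unfolding f_def by (rule mat_poly_apply_le[OF Q(1)])
    also have "{..k} = insert 0 {1..k}" by auto
    also have "(\<Sum>i\<in>insert 0 {1..k}. coeff Q i *\<^sub>R f i) = coeff Q 0 *\<^sub>R f 0 + (\<Sum>i\<in>{1..k}. coeff Q i *\<^sub>R f i)"
      by (rule sum.insert) auto
    also have "coeff Q 0 = 1" using Q(2) by (simp add: poly_0_coeff_0)
    also have "f 0 = y" unfolding f_def by (simp add: mat_pow_def)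
    finally show ?thesis by simp
  qed
  define P where "P = 1 - (\<Sum>j\<in>{1..k}. monom (c j) j)"
  have degP: "degree P \<le> k"
  proof -
    have "degree (\<Sum>j\<in>{1..k}. monom (c j) j) \<le> k"
      by (rule degree_sum_le) (auto intro: order.trans[OF degree_monom_le])
    then show ?thesis unfolding P_def by (intro degree_diff_le) simp_all
  qed
  have P0: "poly P 0 = 1" unfolding P_def by (simp add: poly_sum poly_monom zero_power)
  have coeffP: "coeff P j = - c j" if "j \<in> {1..k}" for j
  proof -
    have "coeff (\<Sum>i\<in>{1..k}. monom (c i) i) j = (\<Sum>i\<in>{1..k}. if i = j then c i else 0)"
      by (simp add: coeff_sum coeff_monom)
    also have "\<dots> = c j" using that by simp
    finally show ?thesis unfolding P_def using that by simp
  qed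
  have Py: "mat_poly P A *v y = z"
  proof -
    have "mat_poly P A *v y = y + (\<Sum>j\<in>{1..k}. coeff P j *\<^sub>R f j)" by (rule app[OF degP P0])
    also have "(\<Sum>j\<in>{1..k}. coeff P j *\<^sub>R f j) = - p"
      unfolding pc by (simp add: coeffP sum_negf[symmetric])
    finally show ?thesis using pz(3) by simp
  qed
  have "norm (mat_poly P A *v y) \<le> norm (mat_poly Q A *v y)" if Q: "degree Q \<le> k" "poly Q 0 = 1" for Q
  proof -
    define u where "u = p + (\<Sum>j\<in>{1..k}. coeff Q j *\<^sub>R f j)"
    have "(\<Sum>j\<in>{1..k}. coeff Q j *\<^sub>R f j) \<in> span V"
      unfolding V_def by (intro span_sum span_scale span_base) auto
    then have uV: "u \<in> span V" unfolding u_def using pz(1) by (simp add: span_add)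
    have Qy: "mat_poly Q A *v y = z + u" unfolding app[OF Q] u_def using pz(3) by (simp add: algebra_simps)
    have "z \<bullet> u = 0" using pz(2)[OF uV] by (simp add: orthogonal_def)
    then have "(norm (z + u))^2 = (norm z)^2 + (norm u)^2"
      by (simp add: power2_norm_eq_inner inner_add_left inner_add_right inner_commute)
    then have "(norm z)^2 \<le> (norm (z + u))^2" by simp
    then have "norm z \<le> norm (z + u)" using norm_ge_zero power2_le_imp_le by blast
    then show ?thesis using Py Qy by simp
  qed
  then have "cgmin A y k P" unfolding cgmin_def using degP P0 by blast
  then show ?thesis by blast
qed

lemma cg_orth:
  assumes cg: "cgmin A y k P" and dq: "degree q < k"
  shows "(\<Sum>mu\<in>eigenvalues A. (norm (Pj A mu *v y))^2 * mu * poly P mu * poly q mu) = 0"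
proof -
  define u where "u = mat_poly P A *v y"
  define xq where "xq = [:0, 1:] * q"
  define v where "v = mat_poly xq A *v y"
  have dP: "degree P \<le> k" and P0: "poly P 0 = 1" using cg unfolding cgmin_def by auto
  have dxq: "degree xq \<le> k"
  proof (cases "q = 0")
    case True then show ?thesis unfolding xq_def by simp
  next
    case False
    then have "degree xq = Suc (degree q)" unfolding xq_def by (simp add: degree_mult_eq)
    then show ?thesis using dq by simp
  qed
  have "0 \<le> 2 * t * (u \<bullet> v) + t^2 * (v \<bullet> v)" for t
  proof -
    define Q where "Q = P + smult t xq"
    have dQ: "degree Q \<le> k" unfolding Q_def using dP dxq
      by (meson degree_add_le degree_smult_le order.trans)
    have Q0: "poly Q 0 = 1" unfolding Q_def xq_def using P0 by simp
    have "norm u \<le> norm (mat_poly Q A *v y)" using cg dQ Q0 unfolding cgmin_def u_def by blast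
    also have "mat_poly Q A *v y = u + t *\<^sub>R v"
      unfolding Q_def u_def v_def mat_poly_add[OF sym] mat_poly_smult[OF sym]
      by (simp add: matrix_vector_mult_add_rdistrib scaleR_matrix_vector_assoc)
    finally have "(norm u)^2 \<le> (norm (u + t *\<^sub>R v))^2" by (simp add: power_mono)
    moreover have "(norm (u + t *\<^sub>R v))^2 = (norm u)^2 + 2 * t * (u \<bullet> v) + t^2 * (v \<bullet> v)"
      unfolding power2_norm_eq_inner
      by (simp add: inner_add_left inner_add_right inner_commute algebra_simps power2_eq_square)
    ultimately show ?thesis by simp
  qed
  then have "u \<bullet> v = 0" by (rule quad_zero)
  moreover have "u \<bullet> v = (\<Sum>mu\<in>eigenvalues A. poly P mu * poly xq mu * (norm (Pj A mu *v y))^2)"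
    unfolding u_def v_def by (rule ip_poly[OF sym])
  ultimately show ?thesis unfolding xq_def by (simp add: mult_ac)
qed

end

lemma prod_bounds:
  fixes as :: "real list"
  assumes "\<forall>a\<in>set as. 0 \<le> a \<and> a \<le> 1"
  shows "0 \<le> prod_list (map (\<lambda>a. 1 - a) as) \<and> 1 - sum_list as \<le> prod_list (map (\<lambda>a. 1 - a) as)
         \<and> prod_list (map (\<lambda>a. 1 - a) as) \<le> exp (- sum_list as)"
  using assms
proof (induction as)
  case Nil then show ?case by simp
next
  case (Cons a as)
  define P where "P = prod_list (map (\<lambda>a. 1 - a) as)"
  define S where "S = sum_list as"
  from Cons have ih: "0 \<le> P" "1 - S \<le> P" "P \<le> exp (- S)" and a: "0 \<le> a" "a \<le> 1" "\<forall>a\<in>set as. 0 \<le> a"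
    unfolding P_def S_def by auto
  have S0: "S \<ge> 0" unfolding S_def using a(3) by (simp add: sum_list_nonneg)
  have "0 \<le> (1 - a) * P" using a ih by simp
  moreover have "1 - (a + S) \<le> (1 - a) * P"
  proof -
    have "(1 - a) * (1 - S) \<le> (1 - a) * P" using ih(2) a by (simp add: mult_left_mono)
    moreover have "(1 - a) * (1 - S) = 1 - a - S + a * S" by (simp add: algebra_simps)
    moreover have "a * S \<ge> 0" using a S0 by simp
    ultimately show ?thesis by linarith
  qed
  moreover have "(1 - a) * P \<le> exp (- a) * exp (- S)"
    by (rule mult_mono[OF one_minus_le_exp ih(3)]) (use ih in simp_all)
  ultimately show ?case unfolding P_def S_def by (simp add: exp_add[symmetric])
qed

lemma lc_rp_sign:
  fixes xs ys :: "real list"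
  assumes "\<forall>z\<in>set xs. z > 0" "\<forall>z\<in>set ys. z > 0" "length xs = length ys"
  shows "prod_list (map (\<lambda>z. -1/z) xs) * prod_list (map (\<lambda>z. -1/z) ys) > 0"
  using assms
proof (induction xs arbitrary: ys)
  case Nil then show ?case by simp
next
  case (Cons x xs)
  then obtain y ys' where ys: "ys = y # ys'" by (cases ys) auto
  have "prod_list (map (\<lambda>z. -1/z) xs) * prod_list (map (\<lambda>z. -1/z) ys') > 0"
    using Cons ys by auto
  moreover have "(-1/x) * (-1/y) > 0" using Cons.prems ys by simp
  ultimately show ?case unfolding ys by (simp add: algebra_simps mult_pos_pos)
qed

definition ipx :: "real set \<Rightarrow> (real \<Rightarrow> real) \<Rightarrow> real poly \<Rightarrow> real poly \<Rightarrow> real" where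
  "ipx L w P Q = (\<Sum>mu\<in>L. w mu * mu * poly P mu * poly Q mu)"

lemma ipx_add2: "ipx L w P (Q1 + Q2) = ipx L w P Q1 + ipx L w P Q2"
  unfolding ipx_def by (simp add: algebra_simps sum.distrib)

lemma ipx_smult2: "ipx L w P (smult c Q) = c * ipx L w P Q"
  unfolding ipx_def by (simp add: sum_distrib_left mult_ac)

lemma ipx_add1: "ipx L w (P1 + P2) Q = ipx L w P1 Q + ipx L w P2 Q"
  unfolding ipx_def by (simp add: algebra_simps sum.distrib)

lemma ipx_smult1: "ipx L w (smult c P) Q = c * ipx L w P Q"
  unfolding ipx_def by (simp add: sum_distrib_left mult_ac)

lemma ipx_self_nonneg:
  assumes "\<forall>mu\<in>L. mu > 0 \<and> w mu \<ge> 0"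
  shows "ipx L w P P \<ge> 0"
  unfolding ipx_def
proof (rule sum_nonneg)
  fix x assume "x \<in> L"
  then have "0 < x" "0 \<le> w x" using assms by auto
  then have "w x * x \<ge> 0" by simp
  moreover have "poly P x * poly P x \<ge> 0" by simp
  ultimately have "(w x * x) * (poly P x * poly P x) \<ge> 0" by (rule mult_nonneg_nonneg)
  then show "w x * x * poly P x * poly P x \<ge> 0" by (simp add: mult_ac)
qed

definition wt :: "real^'n^'n \<Rightarrow> real^'n \<Rightarrow> real \<Rightarrow> real" where
  "wt A y mu = (norm (Pj A mu *v y))^2"

context
  fixes A :: "real^'n^'n" and y :: "real^'n"
  assumes sym: "transpose A = A"
    and pos: "\<forall>mu\<in>eigenvalues A. mu > 0"
    and wpos: "\<forall>mu\<in>eigenvalues A. Pj A mu *v y \<noteq> 0"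
begin


lemma fin: "finite (eigenvalues A)" by (rule finite_eigenvalues[OF sym])

lemma wt_pos: "mu \<in> eigenvalues A \<Longrightarrow> wt A y mu > 0"
  unfolding wt_def using wpos by simp

lemma cg_orth': "cgmin A y k P \<Longrightarrow> degree q < k \<Longrightarrow> ipx (eigenvalues A) (wt A y) P q = 0"
  using cg_orth[OF sym] unfolding ipx_def wt_def by blast

lemma norm_poly: "(norm (mat_poly P A *v y))^2 = (\<Sum>mu\<in>eigenvalues A. (poly P mu)^2 * wt A y mu)"
  using ip_poly[OF sym, of P y P] unfolding wt_def power2_norm_eq_inner[of "mat_poly P A *v y"]
  by (simp add: power2_eq_square)

lemma cg_unique:
  assumes k: "k \<le> card (eigenvalues A)" and c1: "cgmin A y k P1" and c2: "cgmin A y k P2"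
  shows "P1 = P2"
proof (rule ccontr)
  assume ne: "P1 \<noteq> P2"
  define u1 where "u1 = mat_poly P1 A *v y"
  define u2 where "u2 = mat_poly P2 A *v y"
  have d1: "degree P1 \<le> k" "poly P1 0 = 1" and d2: "degree P2 \<le> k" "poly P2 0 = 1"
    using c1 c2 unfolding cgmin_def by auto
  have n12: "norm u1 = norm u2" using c1 c2 d1 d2 unfolding cgmin_def u1_def u2_def by (meson order.antisym)
  define M where "M = smult (1/2) (P1 + P2)"
  have dM: "degree M \<le> k" unfolding M_def using d1 d2 by (simp add: degree_add_le)
  have M0: "poly M 0 = 1" unfolding M_def using d1 d2 by simp
  have My: "mat_poly M A *v y = (1/2) *\<^sub>R (u1 + u2)"
    unfolding M_def u1_def u2_def mat_poly_smult[OF sym] mat_poly_add[OF sym]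
    by (simp add: matrix_vector_mult_add_rdistrib scaleR_matrix_vector_assoc[symmetric])
  have "norm u1 \<le> norm ((1/2) *\<^sub>R (u1 + u2))" using c1 dM M0 My unfolding cgmin_def u1_def by metis
  also have "norm ((1/2) *\<^sub>R (u1 + u2)) = norm (u1 + u2) / 2" by simp
  finally have "2 * norm u1 \<le> norm (u1 + u2)" by simp
  then have "(2 * norm u1)^2 \<le> (norm (u1 + u2))^2" by (rule power_mono) simp
  moreover have "(norm (u1 + u2))^2 + (norm (u1 - u2))^2 = 2 * (norm u1)^2 + 2 * (norm u2)^2"
    unfolding power2_norm_eq_inner
    by (simp add: inner_add_left inner_add_right inner_diff_left inner_diff_right inner_commute)
  moreover have "(2 * norm u1)^2 = 4 * (norm u1)^2" by (simp add: power_mult_distrib)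
  moreover have "(norm u2)^2 = (norm u1)^2" using n12 by simp
  ultimately have "(norm (u1 - u2))^2 \<le> 0" by linarith
  then have "u1 - u2 = 0" by simp
  then have "mat_poly (P1 - P2) A *v y = 0"
    unfolding mat_poly_diff[OF sym] u1_def u2_def by (simp add: matrix_vector_mult_diff_rdistrib)
  then have "(\<Sum>mu\<in>eigenvalues A. (poly (P1 - P2) mu)^2 * wt A y mu) = 0"
    using norm_poly[of "P1 - P2"] by simp
  then have z: "\<forall>mu\<in>eigenvalues A. (poly (P1 - P2) mu)^2 * wt A y mu = 0"
    using sum_nonneg_eq_0_iff[OF fin, of "\<lambda>mu. (poly (P1 - P2) mu)^2 * wt A y mu"] wt_pos
    by (simp add: less_imp_le)
  have roots: "insert 0 (eigenvalues A) \<subseteq> {x. poly (P1 - P2) x = 0}"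
  proof
    fix x assume "x \<in> insert 0 (eigenvalues A)"
    then show "x \<in> {x. poly (P1 - P2) x = 0}"
    proof
      assume "x = 0" then show ?thesis using d1 d2 by simp
    next
      assume x: "x \<in> eigenvalues A"
      then have "(poly (P1 - P2) x)^2 * wt A y x = 0" using z by blast
      then show ?thesis using wt_pos[OF x] by simp
    qed
  qed
  have D0: "P1 - P2 \<noteq> 0" using ne by simp
  have "card (insert 0 (eigenvalues A)) \<le> card {x. poly (P1 - P2) x = 0}"
    by (rule card_mono[OF poly_roots_finite[OF D0] roots])
  also have "\<dots> \<le> degree (P1 - P2)" by (rule card_poly_roots_bound[OF D0])
  also have "\<dots> \<le> k" using d1 d2 by (simp add: degree_diff_le)
  finally have "card (insert 0 (eigenvalues A)) \<le> k" .
  moreover have "0 \<notin> eigenvalues A" using pos by auto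
  ultimately have "Suc (card (eigenvalues A)) \<le> k" using fin by simp
  then show False using k by simp
qed

lemma cg_the:
  assumes k: "k \<le> card (eigenvalues A)"
  shows "cgmin A y k (THE P. cgmin A y k P)"
proof -
  obtain P where P: "cgmin A y k P" using cg_exists[OF sym] by blast
  have "(THE P. cgmin A y k P) = P"
  proof (rule the_equality)
    show "cgmin A y k P" by (rule P)
  next
    fix Q assume "cgmin A y k Q"
    then show "Q = P" using cg_unique[OF k _ P] by blast
  qed
  then show ?thesis using P by simp
qed

lemma cg_roots:
  assumes k: "k \<le> card (eigenvalues A)" and cg: "cgmin A y k P"
  shows "\<exists>zs. length zs = k \<and> (\<forall>z\<in>set zs. z > 0) \<and> P = rp zs"
proof -
  have dP: "degree P \<le> k" and P0: "poly P 0 = 1" using cg unfolding cgmin_def by auto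
  have Pn: "P \<noteq> 0" using P0 by auto
  have orth: "\<forall>q. degree q < k \<longrightarrow> (\<Sum>mu\<in>eigenvalues A. wt A y mu * mu * poly P mu * poly q mu) = 0"
    using cg_orth'[OF cg] unfolding ipx_def by blast
  have posw: "\<forall>mu\<in>eigenvalues A. mu > 0 \<and> wt A y mu > 0" using pos wt_pos by auto
  have kZ: "k \<le> card {z. z > 0 \<and> poly P z = 0}" by (rule sign_change[OF fin posw Pn orth k])
  then obtain zs where zs: "\<forall>z\<in>set zs. z > 0" "P = rp zs"
    using roots_to_rp[OF P0] dP by fastforce
  have "card {z. z > 0 \<and> poly P z = 0} \<le> card {x. poly P x = 0}"
    by (rule card_mono[OF poly_roots_finite[OF Pn]]) auto
  also have "\<dots> \<le> degree P" by (rule card_poly_roots_bound[OF Pn])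
  finally have "degree P = k" using kZ dP by simp
  moreover have "degree P = length zs" using degree_rp[of zs] zs by auto
  ultimately show ?thesis using zs by auto
qed

end

context
  fixes A :: "real^'n^'n" and y :: "real^'n"
  assumes sym: "transpose A = A"
    and pos: "\<forall>mu\<in>eigenvalues A. mu > 0"
    and wpos: "\<forall>mu\<in>eigenvalues A. Pj A mu *v y \<noteq> 0"
begin

lemma interp:
  assumes k1: "Suc k \<le> card (eigenvalues A)" and al: "0 < al" "al \<le> 1"
  defines "P0 \<equiv> THE P. cgmin A y k P" and "P1 \<equiv> THE P. cgmin A y (Suc k) P"
  defines "Pt \<equiv> smult (1 - al) P0 + smult al P1"
  shows "\<exists>zs. zs \<noteq> [] \<and> (\<forall>z\<in>set zs. z > 0) \<and> Pt = rp zs \<and>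
           ipx (eigenvalues A) (wt A y) Pt (rp (remove1 (Min (set zs)) zs)) \<ge> 0"
proof -
  let ?L = "eigenvalues A" and ?w = "wt A y"
  have k0: "k \<le> card ?L" using k1 by simp
  have c0: "cgmin A y k P0" unfolding P0_def by (rule cg_the[OF sym pos wpos k0])
  have c1: "cgmin A y (Suc k) P1" unfolding P1_def by (rule cg_the[OF sym pos wpos k1])
  obtain xs0 where xs0: "length xs0 = k" "\<forall>z\<in>set xs0. z > 0" "P0 = rp xs0"
    using cg_roots[OF sym pos wpos k0 c0] by blast
  obtain xs1 where xs1: "length xs1 = Suc k" "\<forall>z\<in>set xs1. z > 0" "P1 = rp xs1"
    using cg_roots[OF sym pos wpos k1 c1] by blast
  have dg0: "degree P0 = k" and lc0: "lead_coeff P0 = prod_list (map (\<lambda>z. -1/z) xs0)"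
    using degree_rp[of xs0] xs0 by auto
  have dg1: "degree P1 = Suc k" using degree_rp[of xs1] xs1 by auto
  have o0: "ipx ?L ?w P0 q = 0" if "degree q < k" for q using cg_orth'[OF sym pos wpos c0 that] .
  have o1: "ipx ?L ?w P1 q = 0" if "degree q < Suc k" for q using cg_orth'[OF sym pos wpos c1 that] .
  have ot: "ipx ?L ?w Pt q = 0" if "degree q < k" for q
    unfolding Pt_def ipx_add1 ipx_smult1 using o0[OF that] o1 that by simp
  have Pt0: "poly Pt 0 = 1" unfolding Pt_def using c0 c1 unfolding cgmin_def by (simp add: algebra_simps)
  have Ptn: "Pt \<noteq> 0" using Pt0 by auto
  have dgt: "degree Pt = Suc k"
  proof -
    have "degree (smult (1 - al) P0) \<le> k" using dg0 by (simp add: degree_smult_le order.trans[OF degree_smult_le])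
    moreover have "degree (smult al P1) = Suc k" using dg1 al by simp
    ultimately show ?thesis unfolding Pt_def by (simp add: degree_add_eq_right)
  qed
  have neg: "\<forall>x\<le>0. poly Pt x \<noteq> 0"
  proof (intro allI impI)
    fix x :: real assume x: "x \<le> 0"
    have "poly P0 x > 0" using rp_pos_nonpos[OF xs0(2) x] xs0(3) by simp
    moreover have "poly P1 x > 0" using rp_pos_nonpos[OF xs1(2) x] xs1(3) by simp
    ultimately have "(1 - al) * poly P0 x + al * poly P1 x > 0" using al
      by (smt (verit) mult_nonneg_nonneg mult_pos_pos)
    then show "poly Pt x \<noteq> 0" unfolding Pt_def by simp
  qed
  have posw: "\<forall>mu\<in>?L. mu > 0 \<and> ?w mu > 0" using pos wt_pos[OF sym pos wpos] by auto
  have orth: "\<forall>q. degree q < k \<longrightarrow> (\<Sum>mu\<in>?L. ?w mu * mu * poly Pt mu * poly q mu) = 0"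
    using ot unfolding ipx_def by blast
  have kZ: "k \<le> card {z. z > 0 \<and> poly Pt z = 0}"
    by (rule sign_change[OF fin[OF sym pos wpos] posw Ptn orth k0])
  obtain zs where zs: "\<forall>z\<in>set zs. z > 0" "Pt = rp zs"
    using roots_to_rp[OF Pt0] kZ dgt neg by fastforce
  have nz: "\<forall>z\<in>set zs. z \<noteq> 0" using zs(1) by auto
  have "degree (rp zs) = length zs" using degree_rp[OF nz] by blast
  then have lz: "length zs = Suc k" using dgt zs(2) by simp
  then have zne: "zs \<noteq> []" by auto
  define z1 where "z1 = Min (set zs)"
  have z1in: "z1 \<in> set zs" unfolding z1_def using zne by simp
  define ys where "ys = remove1 z1 zs"
  have lys: "length ys = k" unfolding ys_def using lz z1in by (simp add: length_remove1)
  have ysp: "\<forall>z\<in>set ys. z > 0" unfolding ys_def using zs(1) by (meson notin_set_remove1)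
  define phi where "phi = rp ys"
  have dphi: "degree phi = k" and lcphi: "lead_coeff phi = prod_list (map (\<lambda>z. -1/z) ys)"
    using degree_rp[of ys] ysp lys unfolding phi_def by auto
  have i1: "ipx ?L ?w P1 phi = 0" using o1 dphi by simp
  have i0: "ipx ?L ?w P0 phi \<ge> 0"
  proof -
    have sg: "lead_coeff phi * lead_coeff P0 > 0" unfolding lcphi lc0
      by (rule lc_rp_sign[OF ysp xs0(2)]) (simp add: lys xs0(1))
    have lP0: "lead_coeff P0 \<noteq> 0" using sg by auto
    define c where "c = lead_coeff phi / lead_coeff P0"
    have cpos: "c \<ge> 0"
    proof -
      have "c = (lead_coeff phi * lead_coeff P0) / (lead_coeff P0)^2" unfolding c_def using lP0
        by (simp add: power2_eq_square)
      then show ?thesis using sg by simp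
    qed
    define D where "D = phi - smult c P0"
    have dD: "degree D \<le> k" unfolding D_def using dphi dg0 by (simp add: degree_diff_le)
    have cD: "coeff D k = 0" unfolding D_def c_def using dphi dg0 lP0 by simp
    have iD: "ipx ?L ?w P0 D = 0"
    proof (cases "D = 0")
      case True then show ?thesis unfolding ipx_def by simp
    next
      case False
      then have "degree D \<noteq> k" using cD by (metis leading_coeff_0_iff)
      then have "degree D < k" using dD by simp
      then show ?thesis by (rule o0)
    qed
    have "phi = smult c P0 + D" unfolding D_def by simp
    then have "ipx ?L ?w P0 phi = c * ipx ?L ?w P0 P0 + ipx ?L ?w P0 D"
      by (simp add: ipx_add2 ipx_smult2)
    also have "\<dots> = c * ipx ?L ?w P0 P0" using iD by simp
    also have "\<dots> \<ge> 0" using cpos ipx_self_nonneg[of ?L ?w P0] posw by (simp add: less_imp_le)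
    finally show ?thesis .
  qed
  have "ipx ?L ?w Pt phi = (1 - al) * ipx ?L ?w P0 phi + al * ipx ?L ?w P1 phi"
    unfolding Pt_def ipx_add1 ipx_smult1 ..
  also have "\<dots> \<ge> 0" using i0 i1 al by simp
  finally have "ipx ?L ?w Pt phi \<ge> 0" .
  then show ?thesis using zne zs unfolding phi_def ys_def z1_def by blast
qed

end

context
  fixes A :: "real^'n^'n" and y :: "real^'n"
  assumes sym: "transpose A = A"
    and pos: "\<forall>mu\<in>eigenvalues A. mu > 0"
    and wpos: "\<forall>mu\<in>eigenvalues A. Pj A mu *v y \<noteq> 0"
begin

lemma comp_bound:
  fixes zs :: "real list" and av ev :: "real^'n" and g :: "real \<Rightarrow> real^'n"
  assumes zne: "zs \<noteq> []" and zp: "\<forall>z\<in>set zs. z > 0"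
    and ip: "ipx (eigenvalues A) (wt A y) (rp zs) (rp (remove1 (Min (set zs)) zs)) \<ge> 0"
    and ya: "y = av + ev"
    and cond: "(\<Sum>mu\<in>eigenvalues A. exp (- (sum_list (map (\<lambda>z. 1/z) zs) * mu) / 2) *
                 ((Pj A mu *v av) \<bullet> (g mu - Pj A mu *v av))) \<ge> 0"
  shows "(\<Sum>mu\<in>eigenvalues A. (norm ((1 - poly (rp zs) mu) *\<^sub>R (Pj A mu *v y) - g mu))^2)
     \<le> 4 * (\<Sum>mu\<in>eigenvalues A. (norm ((1 - exp (- (sum_list (map (\<lambda>z. 1/z) zs) * mu) / 2)) *\<^sub>R (Pj A mu *v av) - g mu))^2)
       + 4 * (\<Sum>mu\<in>eigenvalues A. min (sum_list (map (\<lambda>z. 1/z) zs) * mu) 1 * (norm (Pj A mu *v ev))^2)"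
proof -
  let ?L = "eigenvalues A"
  define rho where "rho = sum_list (map (\<lambda>z. 1/z) zs)"
  define z1 where "z1 = Min (set zs)"
  define ys where "ys = remove1 z1 zs"
  have z1in: "z1 \<in> set zs" unfolding z1_def using zne by simp
  have z1p: "z1 > 0" using zp z1in by auto
  have z1le: "z1 \<le> z" if "z \<in> set zs" for z unfolding z1_def using that by simp
  have ysub: "set ys \<subseteq> set zs" unfolding ys_def by (rule set_remove1_subset)
  have rho_split: "rho = 1/z1 + sum_list (map (\<lambda>z. 1/z) ys)"
    unfolding rho_def ys_def by (rule sum_list_map_remove1[OF z1in])
  have ysp: "\<forall>z\<in>set ys. z > 0" using ysub zp by blast
  have sys0: "sum_list (map (\<lambda>z. 1/z) ys) \<ge> 0" using ysp by (intro sum_list_nonneg) auto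
  define s where "s mu = mu / z1" for mu
  define c where "c mu = rho * mu" for mu
  define phi where "phi mu = poly (rp ys) mu" for mu
  define a where "a mu = Pj A mu *v av" for mu
  define e where "e mu = Pj A mu *v ev" for mu
  have rpz: "poly (rp zs) mu = (1 - s mu) * phi mu" for mu
  proof -
    have "poly (rp zs) mu = poly [:1, -1/z1:] mu * poly (rp ys) mu"
      unfolding ys_def by (subst rp_remove1[OF z1in]) (rule poly_mult)
    moreover have "poly [:1, -1/z1:] mu = 1 - mu / z1" by simp
    ultimately show ?thesis unfolding s_def phi_def by simp
  qed
  have ae: "a mu + e mu = Pj A mu *v y" for mu unfolding a_def e_def ya by (simp add: matrix_vector_right_distrib)
  have pt: "0 \<le> s mu \<and> s mu \<le> c mu \<and>
      (s mu < 1 \<longrightarrow> 0 \<le> phi mu \<and> 1 - (c mu - s mu) \<le> phi mu \<and> phi mu \<le> exp (- (c mu - s mu))) \<and>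
      (1 \<le> s mu \<longrightarrow> 1 \<le> c mu)" if mu: "mu \<in> ?L" for mu
  proof -
    have mup: "mu > 0" using pos mu by auto
    have s0: "0 \<le> s mu" unfolding s_def using mup z1p by simp
    have cs: "c mu - s mu = sum_list (map (\<lambda>z. mu / z) ys)"
      unfolding c_def s_def rho_split by (simp add: algebra_simps sum_list_const_mult[symmetric] o_def)
    have "sum_list (map (\<lambda>z. mu / z) ys) \<ge> 0" using ysp mup by (intro sum_list_nonneg) auto
    then have sc: "s mu \<le> c mu" using cs by linarith
    have L: "0 \<le> phi mu \<and> 1 - (c mu - s mu) \<le> phi mu \<and> phi mu \<le> exp (- (c mu - s mu))" if s1: "s mu < 1"
    proof -
      have mz: "mu < z1" using s1 z1p unfolding s_def by (simp add: divide_less_eq)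
      have "\<forall>b\<in>set (map (\<lambda>z. mu / z) ys). 0 \<le> b \<and> b \<le> 1"
      proof
        fix b assume "b \<in> set (map (\<lambda>z. mu / z) ys)"
        then obtain z where z: "z \<in> set ys" "b = mu / z" by auto
        then have zz: "z \<in> set zs" using ysub by auto
        have "z \<ge> z1" using z1le[OF zz] .
        then show "0 \<le> b \<and> b \<le> 1" using z mup mz z1p by (simp add: divide_le_eq)
      qed
      from prod_bounds[OF this]
      have pb: "0 \<le> prod_list (map (\<lambda>b. 1 - b) (map (\<lambda>z. mu / z) ys)) \<and>
        1 - sum_list (map (\<lambda>z. mu / z) ys) \<le> prod_list (map (\<lambda>b. 1 - b) (map (\<lambda>z. mu / z) ys)) \<and>
        prod_list (map (\<lambda>b. 1 - b) (map (\<lambda>z. mu / z) ys)) \<le> exp (- sum_list (map (\<lambda>z. mu / z) ys))" .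
      have "phi mu = prod_list (map (\<lambda>b. 1 - b) (map (\<lambda>z. mu / z) ys))"
        unfolding phi_def poly_rp by (simp add: o_def)
      then show ?thesis using pb cs by simp
    qed
    have H: "1 \<le> c mu" if "1 \<le> s mu" using that sc by simp
    show ?thesis using s0 sc L H by blast
  qed
  have HPhi: "(\<Sum>mu\<in>?L. 2 * s mu * (1 - s mu) * (phi mu)^2 * (norm (a mu + e mu))^2) \<ge> 0"
  proof -
    have "(\<Sum>mu\<in>?L. 2 * s mu * (1 - s mu) * (phi mu)^2 * (norm (a mu + e mu))^2)
        = (2 / z1) * ipx ?L (wt A y) (rp zs) (rp ys)"
      unfolding ipx_def sum_distrib_left
    proof (rule sum.cong[OF refl])
      fix mu
      show "2 * s mu * (1 - s mu) * (phi mu)^2 * (norm (a mu + e mu))^2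
          = 2 / z1 * (wt A y mu * mu * poly (rp zs) mu * poly (rp ys) mu)"
        unfolding rpz ae s_def phi_def[symmetric] by (simp add: power2_eq_square wt_def)
    qed
    also have "\<dots> \<ge> 0" using ip z1p unfolding ys_def z1_def by simp
    finally show ?thesis .
  qed
  have cond': "(\<Sum>mu\<in>?L. exp (- c mu / 2) * (a mu \<bullet> (g mu - a mu))) \<ge> 0"
    using cond unfolding c_def a_def rho_def by simp
  have F: "(\<Sum>mu\<in>?L. (norm ((1 - (1 - s mu) * phi mu) *\<^sub>R (a mu + e mu) - g mu))^2)
     \<le> 4 * (\<Sum>mu\<in>?L. (norm ((1 - exp (- c mu / 2)) *\<^sub>R a mu - g mu))^2)
       + 4 * (\<Sum>mu\<in>?L. min (c mu) 1 * (norm (e mu))^2)"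
    by (rule FAL[OF fin[OF sym pos wpos] pt HPhi cond'])
  have yy: "Pj A mu *v y = Pj A mu *v av + Pj A mu *v ev" for mu unfolding ya by (simp add: matrix_vector_right_distrib)
  show ?thesis using F unfolding rpz[symmetric] c_def a_def e_def rho_def yy by simp
qed

end

lemma transpose_add': "transpose (A + B) = transpose A + (transpose B :: real^'n^'m)"
  by (simp add: transpose_def vec_eq_iff)

lemma Sig_hat_sym: "transpose (Sig_hat X) = Sig_hat X"
  unfolding Sig_hat_def by (simp add: transpose_scalar matrix_transpose_mul)

lemma Sig_lam_sym: "transpose (Sig_lam X lam) = Sig_lam X lam"
  unfolding Sig_lam_def by (simp add: transpose_add' Sig_hat_sym transpose_scalar transpose_mat)

lemma rect_dot: "(transpose M *v w) \<bullet> v = w \<bullet> (M *v v)"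
  for M :: "real^'p^'n"
  by (simp add: transpose_matrix_vector dot_lmul_matrix)

lemma Sig_hat_quad:
  fixes X :: "real^'p^'n"
  shows "v \<bullet> (Sig_hat X *v v) = (norm (X *v v))^2 / real CARD('n)"
proof -
  have "Sig_hat X *v v = (1 / real CARD('n)) *\<^sub>R (transpose X *v (X *v v))"
    unfolding Sig_hat_def by (simp add: scaleR_matrix_vector_assoc[symmetric] matrix_vector_mul_assoc)
  then have "v \<bullet> (Sig_hat X *v v) = (1 / real CARD('n)) * ((transpose X *v (X *v v)) \<bullet> v)"
    by (simp add: inner_commute)
  also have "(transpose X *v (X *v v)) \<bullet> v = (X *v v) \<bullet> (X *v v)" by (rule rect_dot)
  finally show ?thesis by (simp add: power2_norm_eq_inner)
qed

lemma Sig_lam_apply: "Sig_lam X lam *v v = Sig_hat X *v v + lam *\<^sub>R v"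
  unfolding Sig_lam_def by (simp add: matrix_vector_mult_add_rdistrib scaleR_matrix_vector_assoc[symmetric])

lemma Sig_hat_pos:
  fixes X :: "real^'p^'n" and y :: "real^'n"
  assumes proj: "\<forall>mu \<in> eigenvalues (Sig_hat X).
          \<exists>v. Sig_hat X *v v = mu *\<^sub>R v \<and> v \<bullet> (transpose X *v y) \<noteq> 0"
    and mu: "mu \<in> eigenvalues (Sig_hat X)"
  shows "mu > 0"
proof -
  have n0: "real CARD('n) > 0" by simp
  obtain v where v: "v \<noteq> 0" "Sig_hat X *v v = mu *\<^sub>R v" using mu unfolding eigenvalues_def by auto
  have "mu * (v \<bullet> v) = (norm (X *v v))^2 / real CARD('n)" using Sig_hat_quad[of v X] v(2) by simp
  then have "mu * (v \<bullet> v) \<ge> 0" using n0 by simp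
  moreover have "v \<bullet> v > 0" using v(1) by simp
  ultimately have m0: "mu \<ge> 0" by (simp add: zero_le_mult_iff)
  show ?thesis
  proof (rule ccontr)
    assume "\<not> mu > 0"
    then have "mu = 0" using m0 by simp
    then obtain u where u: "Sig_hat X *v u = 0" "u \<bullet> (transpose X *v y) \<noteq> 0" using proj mu by auto
    have "(norm (X *v u))^2 / real CARD('n) = 0" using Sig_hat_quad[of u X] u(1) by simp
    then have "X *v u = 0" using n0 by simp
    moreover have "u \<bullet> (transpose X *v y) = y \<bullet> (X *v u)" using rect_dot[of X y u] by (simp add: inner_commute)
    ultimately show False using u(2) by simp
  qed
qed

lemma eig_Sig_lam:
  "mu \<in> eigenvalues (Sig_lam X lam) \<longleftrightarrow> mu - lam \<in> eigenvalues (Sig_hat X)"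
  unfolding eigenvalues_def Sig_lam_apply by (simp add: algebra_simps scaleR_diff_left eq_diff_eq)

lemma mat_fun_inv:
  fixes A :: "real^'n^'n"
  assumes sym: "transpose A = A" and nz: "\<forall>mu\<in>eigenvalues A. f mu \<noteq> 0"
  shows "matrix_inv (mat_fun f A) = mat_fun (\<lambda>x. 1 / f x) A"
proof -
  let ?M = "mat_fun f A" and ?N = "mat_fun (\<lambda>x. 1 / f x) A"
  have "?M ** ?N = mat_fun (\<lambda>x. f x * (1 / f x)) A" by (rule mat_fun_mult[OF sym])
  also have "\<dots> = mat_fun (\<lambda>x. 1) A" by (rule mat_fun_cong[OF sym]) (use nz in simp)
  also have "\<dots> = mat 1" using mat_fun_const[OF sym, of 1] by simp
  finally have MN: "?M ** ?N = mat 1" .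
  have "?N ** ?M = mat_fun (\<lambda>x. 1 / f x * f x) A" by (rule mat_fun_mult[OF sym])
  also have "\<dots> = mat_fun (\<lambda>x. 1) A" by (rule mat_fun_cong[OF sym]) (use nz in simp)
  also have "\<dots> = mat 1" using mat_fun_const[OF sym, of 1] by simp
  finally have NM: "?N ** ?M = mat 1" .
  define B where "B = matrix_inv ?M"
  have "?M ** B = mat 1 \<and> B ** ?M = mat 1"
    unfolding B_def matrix_inv_def by (rule someI[of _ ?N]) (use MN NM in simp)
  then have "B = B ** (?M ** ?N)" and "B ** ?M = mat 1" using MN by simp_all
  then have "B = ?N" by (simp add: matrix_mul_assoc)
  then show ?thesis unfolding B_def .
qed

lemma mat_fun_comm:
  fixes A :: "real^'n^'n"
  assumes sym: "transpose A = A"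
  shows "mat_fun f A *v (mat_fun g A *v v) = mat_fun g A *v (mat_fun f A *v v)"
proof -
  have "mat_fun f A ** mat_fun g A = mat_fun g A ** mat_fun f A"
    unfolding mat_fun_mult[OF sym] by (simp add: mult.commute)
  then show ?thesis by (simp add: matrix_vector_mul_assoc)
qed

lemma Pj_diff: "Pj A mu *v (u - v) = Pj A mu *v u - Pj A mu *v v"
  by (simp add: matrix_vector_mult_diff_distrib)

lemma Pj_add: "Pj A mu *v (u + v) = Pj A mu *v u + Pj A mu *v v"
  by (simp add: matrix_vector_right_distrib)

lemma Pj_scale: "Pj A mu *v (c *\<^sub>R v) = c *\<^sub>R (Pj A mu *v v)"
  by (simp add: matrix_vector_mult_scaleR)

lemma setting:
  fixes X :: "real^'p^'n" and y :: "real^'n" and lam :: real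
  assumes lam: "lam \<ge> 0"
    and proj: "\<forall>mu \<in> eigenvalues (Sig_hat X).
          \<exists>v. Sig_hat X *v v = mu *\<^sub>R v \<and> v \<bullet> (transpose X *v y) \<noteq> 0"
  shows "transpose (Sig_lam X lam) = Sig_lam X lam"
    and "\<forall>mu\<in>eigenvalues (Sig_lam X lam). mu > lam"
    and "\<forall>mu\<in>eigenvalues (Sig_lam X lam). mu > 0"
    and "\<forall>mu\<in>eigenvalues (Sig_lam X lam). Pj (Sig_lam X lam) mu *v y_lam X lam y \<noteq> 0"
proof -
  let ?S = "Sig_lam X lam"
  show sym: "transpose ?S = ?S" by (rule Sig_lam_sym)
  show gl: "\<forall>mu\<in>eigenvalues ?S. mu > lam"
  proof
    fix mu assume "mu \<in> eigenvalues ?S"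
    then have "mu - lam \<in> eigenvalues (Sig_hat X)" using eig_Sig_lam by blast
    then have "mu - lam > 0" by (rule Sig_hat_pos[OF proj])
    then show "mu > lam" by simp
  qed
  then show "\<forall>mu\<in>eigenvalues ?S. mu > 0" using lam by force
  show "\<forall>mu\<in>eigenvalues ?S. Pj ?S mu *v y_lam X lam y \<noteq> 0"
  proof
    fix mu assume mu: "mu \<in> eigenvalues ?S"
    have mp: "mu > 0" using gl mu lam by force
    have "mu - lam \<in> eigenvalues (Sig_hat X)" using eig_Sig_lam mu by blast
    then obtain v where v: "Sig_hat X *v v = (mu - lam) *\<^sub>R v" "v \<bullet> (transpose X *v y) \<noteq> 0"
      using proj by blast
    have ev: "?S *v v = mu *\<^sub>R v" unfolding Sig_lam_apply v(1) by (simp add: algebra_simps)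
    have "Pj ?S mu *v v = v" using Pj_eig[OF sym ev, of mu] by simp
    then have "v \<bullet> (Pj ?S mu *v (transpose X *v y)) \<noteq> 0"
      using v(2) Pj_sym_dot[OF sym, of mu v "transpose X *v y"] by simp
    then have nz: "Pj ?S mu *v (transpose X *v y) \<noteq> 0" by auto
    have "Pj ?S mu *v y_lam X lam y = (1 / real CARD('n) * (1 / sqrt mu)) *\<^sub>R (Pj ?S mu *v (transpose X *v y))"
      unfolding y_lam_def Pj_scale Pj_fun[OF sym] by simp
    then show "Pj ?S mu *v y_lam X lam y \<noteq> 0" using nz mp by simp
  qed
qed

lemma R_CG_eq: "R_CG X lam y k = (THE P. cgmin (Sig_lam X lam) (y_lam X lam y) k P)"
  unfolding R_CG_def cgmin_def ..

lemma Rt_struct: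
  fixes X :: "real^'p^'n" and y :: "real^'n" and lam t :: real
  assumes sym: "transpose (Sig_lam X lam) = Sig_lam X lam"
    and pos: "\<forall>mu\<in>eigenvalues (Sig_lam X lam). mu > 0"
    and wpos: "\<forall>mu\<in>eigenvalues (Sig_lam X lam). Pj (Sig_lam X lam) mu *v y_lam X lam y \<noteq> 0"
    and t0: "0 \<le> t" and tm: "t \<le> real (card (eigenvalues (Sig_lam X lam)))"
  shows "R_CG_t X lam y t = 1 \<or>
    (\<exists>zs. zs \<noteq> [] \<and> (\<forall>z\<in>set zs. z > 0) \<and> R_CG_t X lam y t = rp zs \<and>
       ipx (eigenvalues (Sig_lam X lam)) (wt (Sig_lam X lam) (y_lam X lam y)) (rp zs) (rp (remove1 (Min (set zs)) zs)) \<ge> 0)"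
proof (cases "t \<le> 0")
  case True
  have "cgmin (Sig_lam X lam) (y_lam X lam y) 0 (R_CG X lam y 0)"
    unfolding R_CG_eq by (rule cg_the[OF sym pos wpos]) simp
  then have d: "degree (R_CG X lam y 0) = 0" and p: "poly (R_CG X lam y 0) 0 = 1" unfolding cgmin_def by auto
  have "R_CG X lam y 0 = [:coeff (R_CG X lam y 0) 0:]" by (rule degree0_const[OF d])
  also have "coeff (R_CG X lam y 0) 0 = 1" using p by (simp add: poly_0_coeff_0)
  finally have "R_CG X lam y 0 = 1" by (simp add: one_pCons)
  then show ?thesis using True unfolding R_CG_t_def by simp
next
  case False
  then have tp: "t > 0" by simp
  define k where "k = nat (\<lceil>t\<rceil> - 1)"
  define al where "al = t - real k"
  have "of_int \<lceil>t\<rceil> > (0::real)" using le_of_int_ceiling[of t] tp by linarith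
  then have "\<lceil>t\<rceil> > 0" by simp
  then have c1: "\<lceil>t\<rceil> \<ge> 1" by simp
  have "real k = of_int (\<lceil>t\<rceil> - 1)" unfolding k_def using c1 by (simp only: of_nat_nat)
  then have rk: "real k = of_int \<lceil>t\<rceil> - 1" by simp
  have "of_int \<lceil>t\<rceil> - 1 < t" using ceiling_correct[of t] by linarith
  then have al0: "0 < al" unfolding al_def rk by simp
  have "t \<le> of_int \<lceil>t\<rceil>" by (rule le_of_int_ceiling)
  then have al1: "al \<le> 1" unfolding al_def rk by simp
  have "\<lceil>t\<rceil> \<le> int (card (eigenvalues (Sig_lam X lam)))" using tm by (simp add: ceiling_le_iff)
  moreover have "int (Suc k) = \<lceil>t\<rceil>" unfolding k_def using c1 by simp
  ultimately have k1: "Suc k \<le> card (eigenvalues (Sig_lam X lam))" by linarith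
  have Rt: "R_CG_t X lam y t = smult (1 - al) (R_CG X lam y k) + smult al (R_CG X lam y (Suc k))"
    unfolding R_CG_t_def if_not_P[OF False] Let_def k_def[symmetric] al_def[symmetric] ..
  obtain zs where zs: "zs \<noteq> []" "\<forall>z\<in>set zs. z > 0"
    "smult (1 - al) (THE P. cgmin (Sig_lam X lam) (y_lam X lam y) k P)
      + smult al (THE P. cgmin (Sig_lam X lam) (y_lam X lam y) (Suc k) P) = rp zs"
    "ipx (eigenvalues (Sig_lam X lam)) (wt (Sig_lam X lam) (y_lam X lam y)) (smult (1 - al) (THE P. cgmin (Sig_lam X lam) (y_lam X lam y) k P)
      + smult al (THE P. cgmin (Sig_lam X lam) (y_lam X lam y) (Suc k) P)) (rp (remove1 (Min (set zs)) zs)) \<ge> 0"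
    using interp[OF sym pos wpos k1 al0 al1] by blast
  have "R_CG_t X lam y t = rp zs" unfolding Rt R_CG_eq using zs(3) .
  moreover have "ipx (eigenvalues (Sig_lam X lam)) (wt (Sig_lam X lam) (y_lam X lam y)) (rp zs) (rp (remove1 (Min (set zs)) zs)) \<ge> 0"
    using zs(4) unfolding zs(3) .
  ultimately show ?thesis using zs(1,2) by blast
qed

lemma norm_Pj_fun2:
  fixes A :: "real^'n^'n"
  assumes sym: "transpose A = A"
  shows "(norm (mat_fun f A *v v))^2 = (\<Sum>mu\<in>eigenvalues A. (f mu)^2 * (norm (Pj A mu *v v))^2)"
  unfolding norm_decomp[OF sym, of "mat_fun f A *v v"] Pj_fun[OF sym]
  by (simp add: power_mult_distrib)

lemma sqrt_inv_id:
  fixes A :: "real^'n^'n"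
  assumes sym: "transpose A = A" and pos: "\<forall>mu\<in>eigenvalues A. mu > 0"
  shows "mat_fun sqrt A ** mat_fun (\<lambda>x. 1 / sqrt x) A = mat 1"
proof -
  have "mat_fun sqrt A ** mat_fun (\<lambda>x. 1 / sqrt x) A = mat_fun (\<lambda>x. sqrt x * (1 / sqrt x)) A"
    by (rule mat_fun_mult[OF sym])
  also have "\<dots> = mat_fun (\<lambda>x. 1) A" by (rule mat_fun_cong[OF sym]) (use pos in auto)
  also have "\<dots> = mat 1" using mat_fun_const[OF sym, of 1] by simp
  finally show ?thesis .
qed

lemma sqrt_recip:
  fixes A :: "real^'n^'n"
  assumes sym: "transpose A = A" and pos: "\<forall>mu\<in>eigenvalues A. mu > 0"
  shows "mat_fun sqrt A ** mat_fun (\<lambda>x. 1 / x) A = mat_fun (\<lambda>x. 1 / sqrt x) A"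
proof -
  have "mat_fun sqrt A ** mat_fun (\<lambda>x. 1 / x) A = mat_fun (\<lambda>x. sqrt x * (1 / x)) A"
    by (rule mat_fun_mult[OF sym])
  also have "\<dots> = mat_fun (\<lambda>x. 1 / sqrt x) A"
  proof (rule mat_fun_cong[OF sym])
    fix x assume "x \<in> eigenvalues A"
    then have x: "x > 0" using pos by auto
    have "sqrt x * sqrt x = x" using x by simp
    then show "sqrt x * (1 / x) = 1 / sqrt x" using x by (metis divide_divide_eq_right div_by_1 nonzero_mult_div_cancel_left real_sqrt_gt_0_iff less_irrefl divide_self_if times_divide_eq_right mult_1_right)
  qed
  finally show ?thesis .
qed

theorem proposition3p5:
  fixes X :: "real^'p^'n" and y eps :: "real^'n" and b0 :: "real^'p"
    and lam t :: real
  assumes model: "y = X *v b0 + eps"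
    and lam_nonneg: "lam \<ge> 0"
    and proj_nonzero: "\<forall>mu \<in> eigenvalues (Sig_hat X).
          \<exists>v. Sig_hat X *v v = mu *\<^sub>R v \<and> v \<bullet> (transpose X *v y) \<noteq> 0"
    and t_range: "0 \<le> t" "t \<le> real (card (eigenvalues (Sig_lam X lam)))"
  defines "S \<equiv> Sig_lam X lam"
    and "rho \<equiv> \<bar>poly (pderiv (R_CG_t X lam y t)) 0\<bar>"
  shows
    "(\<forall>gamma :: real^'p.
        ((S ** mat_fun (\<lambda>x. exp (- rho * x / 2)) S) *v beta_lam X lam b0)
           \<bullet> (gamma - beta_lam X lam b0) \<ge> 0 \<longrightarrow>
        (norm (mat_fun sqrt S *v (beta_CG X lam y t - gamma)))\<^sup>2
          \<le> 4 * (norm (mat_fun sqrt S *v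
                 (beta_lam X lam b0 - (mat_fun (\<lambda>x. exp (- rho * x / 2)) S *v beta_lam X lam b0)
                  - gamma)))\<^sup>2
           + 4 * (norm (mat_fun (\<lambda>x. sqrt (min (rho * x) 1)) S *v y_lam X lam eps))\<^sup>2)
     \<and> (\<forall>lam'. 0 \<le> lam' \<and> lam' \<le> lam \<longrightarrow>
        ((S ** mat_fun (\<lambda>x. exp (- rho * x / 2)) S) *v beta_lam X lam b0)
           \<bullet> (beta_lam X lam' b0 - beta_lam X lam b0) \<ge> 0)"
proof -
  note st = setting[OF lam_nonneg proj_nonzero]
  have sym: "transpose S = S" using st(1) unfolding S_def .
  have gl: "\<forall>mu\<in>eigenvalues S. mu > lam" using st(2) unfolding S_def .
  have pos: "\<forall>mu\<in>eigenvalues S. mu > 0" using st(3) unfolding S_def .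
  define yl where "yl = y_lam X lam y"
  define el where "el = y_lam X lam eps"
  have wpos: "\<forall>mu\<in>eigenvalues S. Pj S mu *v yl \<noteq> 0" using st(4) unfolding S_def yl_def .
  define SB where "SB = Sig_hat X *v b0"
  define beta where "beta = beta_lam X lam b0"
  have inv: "matrix_inv S = mat_fun (\<lambda>x. 1 / x) S"
    using mat_fun_inv[OF sym, of "\<lambda>x. x"] mat_fun_id[OF sym] pos by force
  have beta_eq: "beta = mat_fun (\<lambda>x. 1 / x) S *v SB"
    unfolding beta_def beta_lam_def S_def[symmetric] SB_def inv by (simp add: matrix_vector_mul_assoc)
  define av where "av = mat_fun sqrt S *v beta"
  have av_eq: "av = mat_fun (\<lambda>x. 1 / sqrt x) S *v SB"
    unfolding av_def beta_eq matrix_vector_mul_assoc sqrt_recip[OF sym pos] ..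
  have n0: "real CARD('n) \<noteq> 0" by simp
  have XtX: "transpose X ** X = real CARD('n) *\<^sub>R Sig_hat X"
    unfolding Sig_hat_def using n0 by simp
  have yl_split: "yl = av + el"
  proof -
    have "transpose X *v y = transpose X *v (X *v b0) + transpose X *v eps"
      unfolding model by (simp add: matrix_vector_right_distrib)
    also have "transpose X *v (X *v b0) = real CARD('n) *\<^sub>R SB"
      unfolding SB_def matrix_vector_mul_assoc XtX by (simp add: scaleR_matrix_vector_assoc)
    finally have "transpose X *v y = real CARD('n) *\<^sub>R SB + transpose X *v eps" .
    then show ?thesis unfolding yl_def el_def y_lam_def av_eq S_def[symmetric]
      using n0 by (simp add: matrix_vector_right_distrib matrix_vector_mult_scaleR scaleR_add_right)
  qed
  have rho0: "rho \<ge> 0" unfolding rho_def by simp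
  have part1: "\<forall>gamma :: real^'p.
        ((S ** mat_fun (\<lambda>x. exp (- rho * x / 2)) S) *v beta_lam X lam b0)
           \<bullet> (gamma - beta_lam X lam b0) \<ge> 0 \<longrightarrow>
        (norm (mat_fun sqrt S *v (beta_CG X lam y t - gamma)))\<^sup>2
          \<le> 4 * (norm (mat_fun sqrt S *v
                 (beta_lam X lam b0 - (mat_fun (\<lambda>x. exp (- rho * x / 2)) S *v beta_lam X lam b0)
                  - gamma)))\<^sup>2
           + 4 * (norm (mat_fun (\<lambda>x. sqrt (min (rho * x) 1)) S *v y_lam X lam eps))\<^sup>2"
  proof (intro allI impI)
    fix gamma :: "real^'p"
    assume cond0: "((S ** mat_fun (\<lambda>x. exp (- rho * x / 2)) S) *v beta_lam X lam b0)
           \<bullet> (gamma - beta_lam X lam b0) \<ge> 0"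
    define E where "E = mat_fun (\<lambda>x. exp (- rho * x / 2)) S"
    define G where "G = mat_fun sqrt S *v gamma"
    define g where "g mu = Pj S mu *v G" for mu
    define R where "R = R_CG_t X lam y t"
    have rhoR: "rho = \<bar>poly (pderiv R) 0\<bar>" unfolding rho_def R_def ..
    let ?L = "eigenvalues S"
    have bcg: "beta_CG X lam y t = mat_fun (\<lambda>x. 1 / sqrt x) S *v ((mat 1 - mat_poly R S) *v yl)"
      unfolding beta_CG_def S_def[symmetric] R_def yl_def ..
    have lhs_vec: "mat_fun sqrt S *v (beta_CG X lam y t - gamma) = (mat 1 - mat_poly R S) *v yl - G"
      unfolding bcg G_def matrix_vector_mult_diff_distrib matrix_vector_mul_assoc
      by (simp add: matrix_mul_assoc sqrt_inv_id[OF sym pos])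
    have LHS: "(norm (mat_fun sqrt S *v (beta_CG X lam y t - gamma)))^2
        = (\<Sum>mu\<in>?L. (norm ((1 - poly R mu) *\<^sub>R (Pj S mu *v yl) - g mu))^2)"
    proof -
      have "Pj S mu *v ((mat 1 - mat_poly R S) *v yl - G) = (1 - poly R mu) *\<^sub>R (Pj S mu *v yl) - g mu" for mu
        unfolding g_def Pj_diff matrix_vector_mult_diff_rdistrib Pj_poly[OF sym]
        by (simp add: scaleR_diff_left)
      then show ?thesis unfolding lhs_vec norm_decomp[OF sym, of "(mat 1 - mat_poly R S) *v yl - G"] by simp
    qed
    have r1_vec: "mat_fun sqrt S *v (beta - E *v beta - gamma) = av - E *v av - G"
      unfolding av_def G_def E_def matrix_vector_mult_diff_distrib mat_fun_comm[OF sym] ..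
    have RHS1: "(norm (mat_fun sqrt S *v (beta - E *v beta - gamma)))^2
        = (\<Sum>mu\<in>?L. (norm ((1 - exp (- rho * mu / 2)) *\<^sub>R (Pj S mu *v av) - g mu))^2)"
    proof -
      have "Pj S mu *v (av - E *v av - G) = (1 - exp (- rho * mu / 2)) *\<^sub>R (Pj S mu *v av) - g mu" for mu
        unfolding g_def Pj_diff E_def Pj_fun[OF sym] by (simp add: scaleR_diff_left)
      then show ?thesis unfolding r1_vec norm_decomp[OF sym, of "av - E *v av - G"] by simp
    qed
    have RHS2: "(norm (mat_fun (\<lambda>x. sqrt (min (rho * x) 1)) S *v el))^2
        = (\<Sum>mu\<in>?L. min (rho * mu) 1 * (norm (Pj S mu *v el))^2)"
      unfolding norm_Pj_fun2[OF sym]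
    proof (rule sum.cong[OF refl])
      fix mu assume "mu \<in> ?L"
      then have "mu > 0" using pos by auto
      then have "min (rho * mu) 1 \<ge> 0" using rho0 by simp
      then show "(sqrt (min (rho * mu) 1))^2 * (norm (Pj S mu *v el))^2 = min (rho * mu) 1 * (norm (Pj S mu *v el))^2"
        by simp
    qed
    have cond: "(\<Sum>mu\<in>?L. exp (- (rho * mu) / 2) * ((Pj S mu *v av) \<bullet> (g mu - Pj S mu *v av))) \<ge> 0"
    proof -
      have "((S ** E) *v beta) \<bullet> (gamma - beta) = (\<Sum>mu\<in>?L. exp (- (rho * mu) / 2) * ((Pj S mu *v av) \<bullet> (g mu - Pj S mu *v av)))"
        unfolding inner_decomp[OF sym, of "(S ** E) *v beta"]
      proof (rule sum.cong[OF refl])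
        fix mu assume "mu \<in> ?L"
        then have mp: "mu > 0" using pos by auto
        have sq: "sqrt mu * sqrt mu = mu" using mp by simp
        have "Pj S mu *v ((S ** E) *v beta) = (mu * exp (- rho * mu / 2)) *\<^sub>R (Pj S mu *v beta)"
          unfolding matrix_vector_mul_assoc[symmetric] Pj_A[OF sym] E_def Pj_fun[OF sym] by simp
        moreover have "Pj S mu *v av = sqrt mu *\<^sub>R (Pj S mu *v beta)" unfolding av_def Pj_fun[OF sym] ..
        moreover have "g mu = sqrt mu *\<^sub>R (Pj S mu *v gamma)" unfolding g_def G_def Pj_fun[OF sym] ..
        ultimately show "(Pj S mu *v ((S ** E) *v beta)) \<bullet> (Pj S mu *v (gamma - beta))
            = exp (- (rho * mu) / 2) * ((Pj S mu *v av) \<bullet> (g mu - Pj S mu *v av))"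
        proof -
          let ?b = "Pj S mu *v beta" and ?c = "Pj S mu *v gamma" and ?s = "sqrt mu" and ?e = "exp (- rho * mu / 2)"
          have e1: "(Pj S mu *v ((S ** E) *v beta)) \<bullet> (Pj S mu *v (gamma - beta)) = ?e * (mu * (?b \<bullet> ?c - ?b \<bullet> ?b))"
            unfolding Pj_diff \<open>Pj S mu *v ((S ** E) *v beta) = (mu * exp (- rho * mu / 2)) *\<^sub>R (Pj S mu *v beta)\<close>
            by (simp add: inner_diff_right algebra_simps)
          have e2': "(s *\<^sub>R ?b) \<bullet> (s *\<^sub>R ?c - s *\<^sub>R ?b) = (s * s) * (?b \<bullet> ?c - ?b \<bullet> ?b)" for s :: real
            by (simp add: inner_diff_right algebra_simps)
          note e2 = e2'[of "sqrt mu"]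
          show ?thesis unfolding e1 \<open>Pj S mu *v av = sqrt mu *\<^sub>R (Pj S mu *v beta)\<close>
            \<open>g mu = sqrt mu *\<^sub>R (Pj S mu *v gamma)\<close> e2 sq by simp
        qed
      qed
      then show ?thesis using cond0 unfolding E_def beta_def by simp
    qed
    have comp: "(\<Sum>mu\<in>?L. (norm ((1 - poly R mu) *\<^sub>R (Pj S mu *v yl) - g mu))^2)
        \<le> 4 * (\<Sum>mu\<in>?L. (norm ((1 - exp (- rho * mu / 2)) *\<^sub>R (Pj S mu *v av) - g mu))^2)
          + 4 * (\<Sum>mu\<in>?L. min (rho * mu) 1 * (norm (Pj S mu *v el))^2)"
    proof -
      have tm: "t \<le> real (card (eigenvalues S))" using t_range(2) unfolding S_def .
      from Rt_struct[OF sym[unfolded S_def] pos[unfolded S_def] wpos[unfolded S_def yl_def] t_range(1) t_range(2)]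
      have "R = 1 \<or> (\<exists>zs. zs \<noteq> [] \<and> (\<forall>z\<in>set zs. z > 0) \<and> R = rp zs \<and>
          ipx ?L (wt S yl) (rp zs) (rp (remove1 (Min (set zs)) zs)) \<ge> 0)"
        unfolding R_def S_def[symmetric] yl_def[symmetric] .
      then show ?thesis
      proof
        assume R1: "R = 1"
        then have "rho = 0" unfolding rhoR by simp
        then show ?thesis unfolding R1 by (simp add: sum_distrib_left[symmetric] sum_nonneg)
      next
        assume "\<exists>zs. zs \<noteq> [] \<and> (\<forall>z\<in>set zs. z > 0) \<and> R = rp zs \<and>
          ipx ?L (wt S yl) (rp zs) (rp (remove1 (Min (set zs)) zs)) \<ge> 0"
        then obtain zs where zs: "zs \<noteq> []" "\<forall>z\<in>set zs. z > 0" "R = rp zs"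
          "ipx ?L (wt S yl) (rp zs) (rp (remove1 (Min (set zs)) zs)) \<ge> 0" by blast
        have "sum_list (map (\<lambda>z. 1/z) zs) \<ge> 0" using zs(2) by (intro sum_list_nonneg) auto
        then have rz: "rho = sum_list (map (\<lambda>z. 1/z) zs)" unfolding rhoR zs(3) pderiv_rp0 by simp
        have cond': "(\<Sum>mu\<in>?L. exp (- (sum_list (map (\<lambda>z. 1/z) zs) * mu) / 2) *
                 ((Pj S mu *v av) \<bullet> (g mu - Pj S mu *v av))) \<ge> 0" using cond unfolding rz .
        from comp_bound[OF sym pos wpos zs(1,2) zs(4) yl_split cond']
        show ?thesis unfolding zs(3)[symmetric] rz[symmetric] by simp
      qed
    qed
    show "(norm (mat_fun sqrt S *v (beta_CG X lam y t - gamma)))\<^sup>2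
          \<le> 4 * (norm (mat_fun sqrt S *v
                 (beta_lam X lam b0 - (mat_fun (\<lambda>x. exp (- rho * x / 2)) S *v beta_lam X lam b0)
                  - gamma)))\<^sup>2
           + 4 * (norm (mat_fun (\<lambda>x. sqrt (min (rho * x) 1)) S *v y_lam X lam eps))\<^sup>2"
      using comp unfolding LHS beta_def[symmetric] E_def[symmetric] RHS1 el_def[symmetric] RHS2 .
  qed
  have part2: "\<forall>lam'. 0 \<le> lam' \<and> lam' \<le> lam \<longrightarrow>
        ((S ** mat_fun (\<lambda>x. exp (- rho * x / 2)) S) *v beta_lam X lam b0)
           \<bullet> (beta_lam X lam' b0 - beta_lam X lam b0) \<ge> 0"
  proof (intro allI impI)
    fix lam' :: real assume l': "0 \<le> lam' \<and> lam' \<le> lam"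
    define E where "E = mat_fun (\<lambda>x. exp (- rho * x / 2)) S"
    define f where "f x = x - (lam - lam')" for x
    have Sl': "Sig_lam X lam' = mat_fun f S"
    proof -
      have "mat_fun f S = mat_fun (\<lambda>x. x) S - mat_fun (\<lambda>x. lam - lam') S"
        unfolding f_def by (rule mat_fun_diff[OF sym])
      also have "\<dots> = S - (lam - lam') *\<^sub>R mat 1" unfolding mat_fun_id[OF sym] mat_fun_const[OF sym] ..
      also have "\<dots> = Sig_lam X lam'" unfolding S_def Sig_lam_def by (simp add: algebra_simps)
      finally show ?thesis by simp
    qed
    have fpos: "\<forall>mu\<in>eigenvalues S. f mu > 0" using gl l' unfolding f_def by force
    have inv': "matrix_inv (Sig_lam X lam') = mat_fun (\<lambda>x. 1 / f x) S"
      unfolding Sl' by (rule mat_fun_inv[OF sym]) (use fpos in force)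
    have b': "beta_lam X lam' b0 = mat_fun (\<lambda>x. 1 / f x) S *v SB"
      unfolding beta_lam_def inv' SB_def by (simp add: matrix_vector_mul_assoc)
    have "((S ** E) *v beta) \<bullet> (beta_lam X lam' b0 - beta)
        = (\<Sum>mu\<in>eigenvalues S. (mu * exp (- rho * mu / 2) * (1 / mu) * (1 / f mu - 1 / mu)) * (norm (Pj S mu *v SB))^2)"
      unfolding inner_decomp[OF sym, of "(S ** E) *v beta"]
    proof (rule sum.cong[OF refl])
      fix mu
      show "(Pj S mu *v ((S ** E) *v beta)) \<bullet> (Pj S mu *v (beta_lam X lam' b0 - beta))
          = (mu * exp (- rho * mu / 2) * (1 / mu) * (1 / f mu - 1 / mu)) * (norm (Pj S mu *v SB))^2"
        unfolding matrix_vector_mul_assoc[symmetric] Pj_A[OF sym] E_def Pj_fun[OF sym] Pj_diff b' beta_eq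
        by (simp add: inner_diff_right power2_norm_eq_inner algebra_simps)
    qed
    also have "\<dots> \<ge> 0"
    proof (rule sum_nonneg)
      fix mu assume mu: "mu \<in> eigenvalues S"
      have mp: "mu > 0" using pos mu by auto
      have fp: "f mu > 0" using fpos mu by auto
      have "f mu \<le> mu" unfolding f_def using l' by simp
      then have "1 / f mu - 1 / mu \<ge> 0" using fp mp by (simp add: frac_le)
      then show "0 \<le> (mu * exp (- rho * mu / 2) * (1 / mu) * (1 / f mu - 1 / mu)) * (norm (Pj S mu *v SB))^2"
        using mp by simp
    qed
    finally show "((S ** mat_fun (\<lambda>x. exp (- rho * x / 2)) S) *v beta_lam X lam b0)
           \<bullet> (beta_lam X lam' b0 - beta_lam X lam b0) \<ge> 0" unfolding E_def beta_def .
  qed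
  show ?thesis using part1 part2 by blast
qed


end
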